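(* Let $V$ be a vector space with basis $y_1,\dots,y_n$, let $M$ be an invertible $n\times n$ matrix, let $f=(y_1,\dots,y_n)M(y_1,\dots,y_n)^t\in V\otimes V$ and $A=T(V)/(f)$. Then for any $v\in V$ and $c\in\Bbbk$, the filtered algebra $U=T(V)/(f-v-c)$ is a PBW-deformation of $A$.
   Context: $\Bbbk$ is a field of characteristic zero; $T(V)$ is the tensor algebra, and $(y_1,\dots,y_n)M(y_1,\dots,y_n)^t$ denotes $\sum_{i,j}m_{ij}\,y_i\otimes y_j$ where $M=(m_{ij})$. $U$ is filtered by the images of $\bigoplus_{i\le m}V^{\otimes i}$; it is a PBW-deformation of $A$ if its associated graded algebra is isomorphic to $A$. *)

theory Defs
  imports Main "HOL-Algebra.QuotRing"
begin

text \<open>The tensor algebra T(V) of V = span of y_0,...,y_(n-1) over the field 'k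
  (the paper's y_1,...,y_n, indexed from 0 here): an element is a finitely
  supported coefficient function on words (lists of letters < n); the word
  [i1,...,im] stands for the tensor monomial y_i1 (x) ... (x) y_im.\<close>

type_synonym 'k tens = "nat list \<Rightarrow> 'k"

definition tens_carrier :: "nat \<Rightarrow> 'k::field tens set" where
  "tens_carrier n = {p. finite {w. p w \<noteq> 0} \<and> (\<forall>w. p w \<noteq> 0 \<longrightarrow> set w \<subseteq> {..<n})}"

definition tens_add :: "'k::field tens \<Rightarrow> 'k tens \<Rightarrow> 'k tens" where
  "tens_add p q = (\<lambda>w. p w + q w)"

definition tens_mult :: "'k::field tens \<Rightarrow> 'k tens \<Rightarrow> 'k tens" where
  "tens_mult p q = (\<lambda>w. \<Sum>i\<le>length w. p (take i w) * q (drop i w))"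

definition tens_const :: "'k::field \<Rightarrow> 'k tens" where
  "tens_const c = (\<lambda>w. if w = [] then c else 0)"

definition tens_zero :: "'k::field tens" where
  "tens_zero = (\<lambda>w. 0)"

definition tensor_algebra :: "nat \<Rightarrow> ('k::field tens) ring" where
  "tensor_algebra n = \<lparr>carrier = tens_carrier n, mult = tens_mult,
     one = tens_const 1, zero = tens_zero, add = tens_add\<rparr>"

definition quad_elem :: "nat \<Rightarrow> (nat \<Rightarrow> nat \<Rightarrow> 'k::field) \<Rightarrow> 'k tens" where
  "quad_elem n M = (\<lambda>w. \<Sum>i<n. \<Sum>j<n. if w = [i, j] then M i j else 0)"

definition lin_elem :: "nat \<Rightarrow> (nat \<Rightarrow> 'k::field) \<Rightarrow> 'k tens" where
  "lin_elem n a = (\<lambda>w. \<Sum>i<n. if w = [i] then a i else 0)"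

definition invertible_mat :: "nat \<Rightarrow> (nat \<Rightarrow> nat \<Rightarrow> 'k::field) \<Rightarrow> bool" where
  "invertible_mat n M \<longleftrightarrow> (\<exists>N. \<forall>i<n. \<forall>k<n.
      (\<Sum>j<n. M i j * N j k) = (if i = k then 1 else 0) \<and>
      (\<Sum>j<n. N i j * M j k) = (if i = k then 1 else 0))"

definition filt :: "nat \<Rightarrow> nat \<Rightarrow> 'k::field tens set" where
  "filt n m = {p \<in> tens_carrier n. \<forall>w. p w \<noteq> 0 \<longrightarrow> length w \<le> m}"

definition homog :: "nat \<Rightarrow> nat \<Rightarrow> 'k::field tens set" where
  "homog n m = {p \<in> tens_carrier n. \<forall>w. p w \<noteq> 0 \<longrightarrow> length w = m}"

text \<open>For U = T(V)/I: gr_m U = F_m U / F_(m-1) U, which is realised as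
  cosets x + (F_(m-1) + I) with x in F_m (F_(-1) = 0).\<close>
definition lower :: "nat \<Rightarrow> 'k::field tens set \<Rightarrow> nat \<Rightarrow> 'k tens set" where
  "lower n I m = (if m = 0 then I else {tens_add p q | p q. p \<in> filt n (m - 1) \<and> q \<in> I})"

definition gcoset :: "nat \<Rightarrow> 'k::field tens set \<Rightarrow> nat \<Rightarrow> 'k tens \<Rightarrow> 'k tens set" where
  "gcoset n I m x = {tens_add x z | z. z \<in> lower n I m}"

definition grrep :: "nat \<Rightarrow> nat \<Rightarrow> 'k::field tens set \<Rightarrow> 'k tens" where
  "grrep n m X = (SOME x. x \<in> filt n m \<and> x \<in> X)"

text \<open>The associated graded algebra gr U = (+)_m gr_m U: an element is a
  family of homogeneous components, almost all zero.\<close>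
definition assoc_graded :: "nat \<Rightarrow> 'k::field tens set \<Rightarrow> (nat \<Rightarrow> 'k tens set) ring" where
  "assoc_graded n I = \<lparr>
     carrier = {d. (\<forall>m. \<exists>x \<in> filt n m. d m = gcoset n I m x) \<and>
                   finite {m. d m \<noteq> lower n I m}},
     mult = (\<lambda>d e m. gcoset n I m
              (\<lambda>w. \<Sum>i\<le>m. tens_mult (grrep n i (d i)) (grrep n (m - i) (e (m - i))) w)),
     one = (\<lambda>m. gcoset n I m (if m = 0 then tens_const 1 else tens_zero)),
     zero = (\<lambda>m. lower n I m),
     add = (\<lambda>d e m. gcoset n I m (tens_add (grrep n m (d m)) (grrep n m (e m))))\<rparr>"

definition gr_scalar :: "nat \<Rightarrow> 'k::field tens set \<Rightarrow> 'k \<Rightarrow> (nat \<Rightarrow> 'k tens set)" where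
  "gr_scalar n I c = (\<lambda>m. gcoset n I m (if m = 0 then tens_const c else tens_zero))"

definition gr_degree :: "nat \<Rightarrow> 'k::field tens set \<Rightarrow> nat \<Rightarrow> (nat \<Rightarrow> 'k tens set) set" where
  "gr_degree n I m = {d \<in> carrier (assoc_graded n I). \<forall>j. j \<noteq> m \<longrightarrow> d j = lower n I j}"

text \<open>U = T(V)/(g) (filtered) is a PBW-deformation of A = T(V)/(f) (graded):
  gr U is isomorphic to A as graded 'k-algebras.\<close>
definition PBW_deformation :: "nat \<Rightarrow> 'k::field tens \<Rightarrow> 'k tens \<Rightarrow> bool" where
  "PBW_deformation n g f \<longleftrightarrow>
    (let T = tensor_algebra n; If = genideal T {f}; Ig = genideal T {g} in
     \<exists>\<phi>. \<phi> \<in> ring_iso (T Quot If) (assoc_graded n Ig) \<and>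
        (\<forall>c. \<phi> (a_r_coset T If (tens_const c)) = gr_scalar n Ig c) \<and>
        (\<forall>m. \<phi> ` {a_r_coset T If p | p. p \<in> homog n m} = gr_degree n Ig m))"

end

theory Submission
  imports Defs "HOL-Library.Function_Algebras"
begin


lemma sum_fun_apply: "(\<Sum>i\<in>A. (F i :: 'a \<Rightarrow> 'b::comm_monoid_add)) x = (\<Sum>i\<in>A. F i x)"
  by (induction A rule: infinite_finite_induct) auto

lemma sum_single:
  assumes "finite A" "a \<in> A" "\<And>x. x \<in> A \<Longrightarrow> x \<noteq> a \<Longrightarrow> g x = 0"
  shows "sum g A = (g a :: 'b::comm_monoid_add)"
proof -
  have "sum g A = g a + sum g (A - {a})" using assms by (simp add: sum.remove)
  also have "sum g (A - {a}) = 0" using assms by (intro sum.neutral) auto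
  finally show ?thesis by simp
qed

lemma add_nz: "(a::'a::comm_monoid_add) + b \<noteq> 0 \<Longrightarrow> a \<noteq> 0 \<or> b \<noteq> 0" by auto
lemma diff_nz: "(a::'a::ab_group_add) - b \<noteq> 0 \<Longrightarrow> a \<noteq> 0 \<or> b \<noteq> 0" by auto

lemma drop_single: "x \<le> length w \<Longrightarrow> drop x w = [k] \<longleftrightarrow> (x = length w - 1 \<and> w \<noteq> [] \<and> last w = k)"
proof (cases w rule: rev_cases)
  case Nil then show ?thesis by auto
next
  case (snoc ys y)
  assume x: "x \<le> length w"
  show ?thesis
  proof
    assume d: "drop x w = [k]"
    then have "length (drop x w) = 1" by simp
    then have x1: "x = length w - 1" using x by simp
    then have "x < length w" using snoc by simp
    then have "last w = last (drop x w)" by simp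
    then have "last w = k" using d by simp
    then show "x = length w - 1 \<and> w \<noteq> [] \<and> last w = k" using snoc x1 by simp
  next
    assume "x = length w - 1 \<and> w \<noteq> [] \<and> last w = k"
    then show "drop x w = [k]" using snoc by simp
  qed
qed
lemma take_single: "x \<le> length w \<Longrightarrow> take x w = [k] \<longleftrightarrow> (x = 1 \<and> w \<noteq> [] \<and> hd w = k)"
  by (cases w) (auto simp: take_Cons')

definition smul :: "'k::field \<Rightarrow> 'k tens \<Rightarrow> 'k tens" where
  "smul c p = (\<lambda>w. c * p w)"

abbreviation tm (infixl "\<odot>" 70) where "p \<odot> q \<equiv> tens_mult p q"

definition wd :: "nat list \<Rightarrow> 'k::field tens" where
  "wd u = (\<lambda>w. if w = u then 1 else 0)"

definition hc :: "nat \<Rightarrow> 'k::field tens \<Rightarrow> 'k tens" where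
  "hc d p = (\<lambda>w. if length w = d then p w else 0)"

definition rho :: "nat \<Rightarrow> 'k::field tens \<Rightarrow> 'k tens" where
  "rho k p = (\<lambda>w. p (w @ [k]))"

lemma tens_add_eq: "tens_add p q = p + q" by (simp add: tens_add_def fun_eq_iff)
lemma tens_zero_eq: "tens_zero = 0" by (simp add: tens_zero_def fun_eq_iff)

lemma smul_apply[simp]: "smul c p w = c * p w" by (simp add: smul_def)
lemma hc_apply: "hc d p w = (if length w = d then p w else 0)" by (simp add: hc_def)
lemma rho_apply[simp]: "rho k p w = p (w @ [k])" by (simp add: rho_def)

lemma tm_apply: "(p \<odot> q) w = (\<Sum>i\<le>length w. p (take i w) * q (drop i w))"
  by (simp add: tens_mult_def)

lemma tm_add_left: "(p + q) \<odot> r = p \<odot> r + q \<odot> r"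
  by (simp add: tens_mult_def fun_eq_iff distrib_right sum.distrib)
lemma tm_add_right: "r \<odot> (p + q) = r \<odot> p + r \<odot> q"
  by (simp add: tens_mult_def fun_eq_iff distrib_left sum.distrib)
lemma tm_diff_left: "(p - q) \<odot> r = p \<odot> r - q \<odot> r"
  by (simp add: tens_mult_def fun_eq_iff left_diff_distrib sum_subtractf)
lemma tm_diff_right: "r \<odot> (p - q) = r \<odot> p - r \<odot> q"
  by (simp add: tens_mult_def fun_eq_iff right_diff_distrib sum_subtractf)
lemma tm_neg_left: "(- p) \<odot> r = - (p \<odot> r)"
  by (simp add: tens_mult_def fun_eq_iff sum_negf)
lemma tm_neg_right: "r \<odot> (- p) = - (r \<odot> p)"
  by (simp add: tens_mult_def fun_eq_iff sum_negf)
lemma tm_zero_left[simp]: "0 \<odot> r = 0"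
  by (simp add: tens_mult_def fun_eq_iff)
lemma tm_zero_right[simp]: "r \<odot> 0 = 0"
  by (simp add: tens_mult_def fun_eq_iff)
lemma tm_smul_left: "smul c p \<odot> r = smul c (p \<odot> r)"
  by (simp add: tens_mult_def fun_eq_iff sum_distrib_left mult.assoc)
lemma tm_smul_right: "r \<odot> smul c p = smul c (r \<odot> p)"
  by (simp add: tens_mult_def fun_eq_iff sum_distrib_left algebra_simps)
lemma tm_sum_left: "(\<Sum>i\<in>A. F i) \<odot> r = (\<Sum>i\<in>A. F i \<odot> r)"
  by (simp add: fun_eq_iff tm_apply sum_fun_apply sum_distrib_right sum.swap[where A=A])
lemma tm_sum_right: "r \<odot> (\<Sum>i\<in>A. F i) = (\<Sum>i\<in>A. r \<odot> F i)"
  by (simp add: fun_eq_iff tm_apply sum_fun_apply sum_distrib_left sum.swap[where A=A])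

lemma tri_swap: "(\<Sum>i\<le>(L::nat). \<Sum>j\<le>i. (F j i::'a::comm_monoid_add)) = (\<Sum>j\<le>L. \<Sum>i\<in>{j..L}. F j i)"
proof (induction L)
  case 0 then show ?case by simp
next
  case (Suc L)
  have "(\<Sum>j\<le>Suc L. \<Sum>i\<in>{j..Suc L}. F j i) = (\<Sum>j\<le>L. \<Sum>i\<in>{j..Suc L}. F j i) + F (Suc L) (Suc L)"
    by simp
  also have "(\<Sum>j\<le>L. \<Sum>i\<in>{j..Suc L}. F j i) = (\<Sum>j\<le>L. (\<Sum>i\<in>{j..L}. F j i) + F j (Suc L))"
    by (intro sum.cong refl) (simp add: atLeastAtMostSuc_conv add.commute)
  finally show ?case using Suc by (simp add: sum.distrib add.assoc)
qed

lemma smul_add: "smul c (p + q) = smul c p + smul c q"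
  by (simp add: fun_eq_iff algebra_simps)
lemma smul_sum: "smul c (\<Sum>i\<in>A. F i) = (\<Sum>i\<in>A. smul c (F i))"
  by (simp add: fun_eq_iff sum_fun_apply sum_distrib_left)
lemma smul_smul: "smul a (smul b p) = smul (a*b) p"
  by (simp add: fun_eq_iff)
lemma smul_one[simp]: "smul 1 p = p" by (simp add: fun_eq_iff)
lemma smul_zero[simp]: "smul 0 p = 0" "smul c 0 = 0" by (simp_all add: fun_eq_iff)
lemma smul_neg: "smul (-1) p = - p" by (simp add: fun_eq_iff)

lemma tm_assoc_inner:
  assumes j: "j \<le> length w"
  shows "(\<Sum>i\<in>{j..length w}. p (take j w) * q (drop j (take i w)) * r (drop i w))
       = p (take j w) * (q \<odot> r) (drop j w)"
proof -
  have "(\<Sum>i\<in>{j..length w}. p (take j w) * q (drop j (take i w)) * r (drop i w))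
        = (\<Sum>i\<le>length w - j. p (take j w) * q (drop j (take (i+j) w)) * r (drop (i+j) w))"
    using j by (intro sum.reindex_bij_witness[where i="\<lambda>i. i + j" and j="\<lambda>i. i - j"]) auto
  also have "\<dots> = p (take j w) * (\<Sum>i\<le>length (drop j w). q (take i (drop j w)) * r (drop i (drop j w)))"
    by (auto simp: sum_distrib_left mult.assoc take_drop add.commute intro!: sum.cong)
  finally show ?thesis by (simp add: tm_apply)
qed

lemma tm_assoc: "(p \<odot> q) \<odot> r = p \<odot> (q \<odot> r)"
proof (rule ext)
  fix w :: "nat list"
  define L where "L = length w"
  define F where "F = (\<lambda>j i. p (take j w) * q (drop j (take i w)) * r (drop i w))"
  have "((p \<odot> q) \<odot> r) w = (\<Sum>i\<le>L. \<Sum>j\<le>i. F j i)"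
    unfolding tm_apply L_def F_def
    by (auto intro!: sum.cong simp: sum_distrib_right min_def)
  also have "\<dots> = (\<Sum>j\<le>L. \<Sum>i\<in>{j..L}. F j i)"
    by (rule tri_swap)
  also have "\<dots> = (\<Sum>j\<le>L. p (take j w) * (q \<odot> r) (drop j w))"
    by (intro sum.cong refl) (simp add: F_def L_def tm_assoc_inner)
  also have "\<dots> = (p \<odot> (q \<odot> r)) w"
    by (simp add: tm_apply[of p "q \<odot> r"] L_def)
  finally show "((p \<odot> q) \<odot> r) w = (p \<odot> (q \<odot> r)) w" .
qed


definition deg_le :: "nat \<Rightarrow> 'k::field tens \<Rightarrow> bool" where
  "deg_le a p \<longleftrightarrow> (\<forall>w. p w \<noteq> 0 \<longrightarrow> length w \<le> a)"
definition is_hom :: "nat \<Rightarrow> 'k::field tens \<Rightarrow> bool" where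
  "is_hom d p \<longleftrightarrow> (\<forall>w. p w \<noteq> 0 \<longrightarrow> length w = d)"

lemma filt_eq: "filt n m = {p \<in> tens_carrier n. deg_le m p}"
  by (simp add: filt_def deg_le_def)
lemma homog_eq: "homog n m = {p \<in> tens_carrier n. is_hom m p}"
  by (simp add: homog_def is_hom_def)

lemma carrierD: "p \<in> tens_carrier n \<Longrightarrow> p w \<noteq> 0 \<Longrightarrow> set w \<subseteq> {..<n}"
  by (simp add: tens_carrier_def)
lemma carrier_finite: "p \<in> tens_carrier n \<Longrightarrow> finite {w. p w \<noteq> 0}"
  by (simp add: tens_carrier_def)

lemma carrier_zero[simp]: "0 \<in> tens_carrier n"
  by (simp add: tens_carrier_def)
lemma carrier_add[intro]:
  assumes p: "p \<in> tens_carrier n" and q: "q \<in> tens_carrier n" shows "p + q \<in> tens_carrier n"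
proof -
  have "{w. (p + q) w \<noteq> 0} \<subseteq> {w. p w \<noteq> 0} \<union> {w. q w \<noteq> 0}" by auto
  then have "finite {w. (p + q) w \<noteq> 0}"
    using carrier_finite[OF p] carrier_finite[OF q] by (meson finite_UnI finite_subset)
  moreover have "set w \<subseteq> {..<n}" if "(p + q) w \<noteq> 0" for w
  proof -
    have "p w \<noteq> 0 \<or> q w \<noteq> 0" using that by auto
    then show ?thesis using carrierD[OF p] carrierD[OF q] by blast
  qed
  ultimately show ?thesis unfolding tens_carrier_def by blast
qed
lemma carrier_smul[intro]: assumes p: "p \<in> tens_carrier n" shows "smul c p \<in> tens_carrier n"
proof -
  have "{w. smul c p w \<noteq> 0} \<subseteq> {w. p w \<noteq> 0}" by auto
  then have "finite {w. smul c p w \<noteq> 0}" using carrier_finite[OF p] by (rule finite_subset)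
  then show ?thesis using carrierD[OF p] unfolding tens_carrier_def by auto
qed
lemma carrier_neg[intro]: "p \<in> tens_carrier n \<Longrightarrow> - p \<in> tens_carrier n"
  unfolding tens_carrier_def by auto
lemma carrier_diff[intro]: "p \<in> tens_carrier n \<Longrightarrow> q \<in> tens_carrier n \<Longrightarrow> p - q \<in> tens_carrier n"
  using carrier_add[of p n "-q"] carrier_neg[of q n] by simp
lemma carrier_sum[intro]: "(\<And>i. i \<in> A \<Longrightarrow> F i \<in> tens_carrier n) \<Longrightarrow> (\<Sum>i\<in>A. F i) \<in> tens_carrier n"
  by (induction A rule: infinite_finite_induct) auto
lemma carrier_hc[intro]: assumes p: "p \<in> tens_carrier n" shows "hc d p \<in> tens_carrier n"
proof -
  have "{w. hc d p w \<noteq> 0} \<subseteq> {w. p w \<noteq> 0}" by (auto simp: hc_apply)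
  then have "finite {w. hc d p w \<noteq> 0}" using carrier_finite[OF p] by (rule finite_subset)
  then show ?thesis using carrierD[OF p] unfolding tens_carrier_def by (auto simp: hc_apply split: if_splits)
qed
lemma carrier_wd[intro]: "set u \<subseteq> {..<n} \<Longrightarrow> wd u \<in> tens_carrier n"
  unfolding tens_carrier_def wd_def by auto
lemma carrier_const[intro]: "tens_const c \<in> tens_carrier n"
  unfolding tens_carrier_def tens_const_def by auto

lemma carrier_rho[intro]:
  assumes p: "p \<in> tens_carrier n" and k: "k < n" shows "rho k p \<in> tens_carrier n"
proof -
  have sub: "{w. rho k p w \<noteq> 0} \<subseteq> butlast ` {w. p w \<noteq> 0}"
  proof
    fix w assume "w \<in> {w. rho k p w \<noteq> 0}"
    then have "p (w @ [k]) \<noteq> 0" by simp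
    then show "w \<in> butlast ` {w. p w \<noteq> 0}" by (intro image_eqI[where x="w @ [k]"]) simp_all
  qed
  have fin: "finite {w. rho k p w \<noteq> 0}"
    by (rule finite_subset[OF sub finite_imageI[OF carrier_finite[OF p]]])
  have "set w \<subseteq> {..<n}" if "rho k p w \<noteq> 0" for w
    using carrierD[OF p, of "w @ [k]"] that by simp
  then show ?thesis using fin unfolding tens_carrier_def by blast
qed

lemma tm_nonzero:
  assumes "(p \<odot> q) w \<noteq> 0"
  obtains i where "i \<le> length w" "p (take i w) \<noteq> 0" "q (drop i w) \<noteq> 0"
proof -
  from assms have "(\<Sum>i\<le>length w. p (take i w) * q (drop i w)) \<noteq> 0" by (simp add: tm_apply)
  then obtain i where "i \<le> length w" "p (take i w) * q (drop i w) \<noteq> 0"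
    by (metis (no_types, lifting) atMost_iff sum.neutral)
  then show ?thesis using that by auto
qed

lemma carrier_tm[intro]:
  assumes p: "p \<in> tens_carrier n" and q: "q \<in> tens_carrier n" shows "p \<odot> q \<in> tens_carrier n"
proof -
  have sub: "{w. (p \<odot> q) w \<noteq> 0} \<subseteq> (\<lambda>(u,v). u @ v) ` ({w. p w \<noteq> 0} \<times> {w. q w \<noteq> 0})"
  proof
    fix w assume "w \<in> {w. (p \<odot> q) w \<noteq> 0}"
    then have nz: "(p \<odot> q) w \<noteq> 0" by simp
    obtain i where i: "i \<le> length w" "p (take i w) \<noteq> 0" "q (drop i w) \<noteq> 0" by (rule tm_nonzero[OF nz])
    then have "(take i w, drop i w) \<in> {w. p w \<noteq> 0} \<times> {w. q w \<noteq> 0}" using i by simp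
    moreover have "w = (\<lambda>(u,v). u @ v) (take i w, drop i w)" by simp
    ultimately show "w \<in> (\<lambda>(u,v). u @ v) ` ({w. p w \<noteq> 0} \<times> {w. q w \<noteq> 0})"
      by (rule rev_image_eqI)
  qed
  have fin: "finite {w. (p \<odot> q) w \<noteq> 0}"
    by (rule finite_subset[OF sub finite_imageI[OF finite_cartesian_product[OF carrier_finite[OF p] carrier_finite[OF q]]]])
  have "set w \<subseteq> {..<n}" if nz: "(p \<odot> q) w \<noteq> 0" for w
  proof -
    obtain i where "i \<le> length w" "p (take i w) \<noteq> 0" "q (drop i w) \<noteq> 0" by (rule tm_nonzero[OF nz])
    then have "set (take i w) \<subseteq> {..<n}" "set (drop i w) \<subseteq> {..<n}" using carrierD[OF p] carrierD[OF q] by auto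
    moreover have "set w = set (take i w) \<union> set (drop i w)" by (metis append_take_drop_id set_append)
    ultimately show ?thesis by simp
  qed
  then show ?thesis using fin unfolding tens_carrier_def by blast
qed

lemma deg_le_tm: assumes "deg_le a p" "deg_le b q" shows "deg_le (a+b) (p \<odot> q)"
  unfolding deg_le_def
proof (intro allI impI)
  fix w assume nz: "(p \<odot> q) w \<noteq> 0"
  obtain i where "i \<le> length w" "p (take i w) \<noteq> 0" "q (drop i w) \<noteq> 0" by (rule tm_nonzero[OF nz])
  then have "length (take i w) \<le> a" "length (drop i w) \<le> b" using assms by (auto simp: deg_le_def)
  then have "length (take i w) + length (drop i w) \<le> a + b" by simp
  then show "length w \<le> a + b" by (metis append_take_drop_id length_append)
qed
lemma is_hom_tm: assumes "is_hom a p" "is_hom b q" shows "is_hom (a+b) (p \<odot> q)"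
  unfolding is_hom_def
proof (intro allI impI)
  fix w assume nz: "(p \<odot> q) w \<noteq> 0"
  obtain i where "i \<le> length w" "p (take i w) \<noteq> 0" "q (drop i w) \<noteq> 0" by (rule tm_nonzero[OF nz])
  then have "length (take i w) = a" "length (drop i w) = b" using assms by (auto simp: is_hom_def)
  then have "length (take i w) + length (drop i w) = a + b" by simp
  then show "length w = a + b" by (metis append_take_drop_id length_append)
qed
lemma is_hom_deg_le: "is_hom a p \<Longrightarrow> deg_le a p" by (simp add: is_hom_def deg_le_def)
lemma deg_le_mono: "deg_le a p \<Longrightarrow> a \<le> b \<Longrightarrow> deg_le b p" by (auto simp: deg_le_def)
lemma deg_le_add: "deg_le a p \<Longrightarrow> deg_le a q \<Longrightarrow> deg_le a (p + q)" by (auto simp: deg_le_def dest!: add_nz)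
lemma deg_le_neg: "deg_le a p \<Longrightarrow> deg_le a (- p)" by (auto simp: deg_le_def)
lemma deg_le_diff: "deg_le a p \<Longrightarrow> deg_le a q \<Longrightarrow> deg_le a (p - q)"
  unfolding deg_le_def minus_apply by (metis diff_zero eq_iff_diff_eq_0)
lemma deg_le_smul: "deg_le a p \<Longrightarrow> deg_le a (smul c p)" by (auto simp: deg_le_def)
lemma deg_le_zero[simp]: "deg_le a 0" by (auto simp: deg_le_def)
lemma deg_le_sum: "(\<And>i. i \<in> A \<Longrightarrow> deg_le a (F i)) \<Longrightarrow> deg_le a (\<Sum>i\<in>A. F i)"
  by (induction A rule: infinite_finite_induct) (auto intro: deg_le_add)
lemma is_hom_add: "is_hom a p \<Longrightarrow> is_hom a q \<Longrightarrow> is_hom a (p + q)" by (auto simp: is_hom_def dest!: add_nz)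
lemma is_hom_neg: "is_hom a p \<Longrightarrow> is_hom a (- p)" by (auto simp: is_hom_def)
lemma is_hom_diff: "is_hom a p \<Longrightarrow> is_hom a q \<Longrightarrow> is_hom a (p - q)"
  unfolding is_hom_def minus_apply by (metis diff_zero eq_iff_diff_eq_0)
lemma is_hom_smul: "is_hom a p \<Longrightarrow> is_hom a (smul c p)" by (auto simp: is_hom_def)
lemma is_hom_zero[simp]: "is_hom a 0" by (auto simp: is_hom_def)
lemma is_hom_sum: "(\<And>i. i \<in> A \<Longrightarrow> is_hom a (F i)) \<Longrightarrow> is_hom a (\<Sum>i\<in>A. F i)"
  by (induction A rule: infinite_finite_induct) (auto intro: is_hom_add)
lemma is_hom_wd: "is_hom (length u) (wd u)" by (simp add: is_hom_def wd_def)
lemma is_hom_hc: "is_hom d (hc d p)" by (simp add: is_hom_def hc_def)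

lemma hc_add: "hc d (p + q) = hc d p + hc d q" by (simp add: hc_def fun_eq_iff)
lemma hc_diff: "hc d (p - q) = hc d p - hc d q" by (simp add: hc_def fun_eq_iff)
lemma hc_neg: "hc d (- p) = - hc d p" by (simp add: hc_def fun_eq_iff)
lemma hc_smul: "hc d (smul c p) = smul c (hc d p)" by (simp add: hc_def fun_eq_iff)
lemma hc_zero[simp]: "hc d 0 = 0" by (simp add: hc_def fun_eq_iff)
lemma hc_sum: "hc d (\<Sum>i\<in>A. F i) = (\<Sum>i\<in>A. hc d (F i))"
  by (simp add: hc_def fun_eq_iff sum_fun_apply)
lemma hc_hom: "is_hom d p \<Longrightarrow> hc d p = p" by (auto simp: hc_def fun_eq_iff is_hom_def)
lemma hc_hom_other: "is_hom e p \<Longrightarrow> e \<noteq> d \<Longrightarrow> hc d p = 0" by (auto simp: hc_def fun_eq_iff is_hom_def)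
lemma hc_deg_gt: "deg_le a p \<Longrightarrow> a < d \<Longrightarrow> hc d p = 0" by (auto simp: hc_def fun_eq_iff deg_le_def)
lemma hc_hc: "hc d (hc d p) = hc d p" by (simp add: hc_def fun_eq_iff)
lemma hc_hc_other: "e \<noteq> d \<Longrightarrow> hc d (hc e p) = 0" by (simp add: hc_def fun_eq_iff)
lemma deg_le_hc: "deg_le d (hc d p)" by (simp add: deg_le_def hc_def)

lemma carrier_bounded: assumes p: "p \<in> tens_carrier n" shows "\<exists>B. deg_le B p"
proof -
  have "finite (length ` {w. p w \<noteq> 0})" using carrier_finite[OF p] by (rule finite_imageI)
  then obtain B where B: "\<And>x. x \<in> length ` {w. p w \<noteq> 0} \<Longrightarrow> x \<le> B"
    using finite_nat_set_iff_bounded_le by meson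
  have "deg_le B p" unfolding deg_le_def
  proof (intro allI impI)
    fix w assume "p w \<noteq> 0" then show "length w \<le> B" using B by simp
  qed
  then show ?thesis by blast
qed

lemma hc_decomp: "deg_le B p \<Longrightarrow> p = (\<Sum>d\<le>B. hc d p)"
proof (rule ext)
  fix w assume B: "deg_le B p"
  show "p w = (\<Sum>d\<le>B. hc d p) w"
  proof (cases "length w \<le> B")
    case True
    then have "(\<Sum>d\<le>B. hc d p w) = hc (length w) p w"
      by (intro sum_single) (auto simp: hc_def)
    then show ?thesis by (simp add: sum_fun_apply hc_def)
  next
    case False
    then show ?thesis using B by (auto simp: sum_fun_apply hc_def deg_le_def)
  qed
qed

lemma hc_tm: "hc d (p \<odot> q) = (\<Sum>i\<le>d. hc i p \<odot> hc (d - i) q)"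
proof (rule ext)
  fix w
  show "hc d (p \<odot> q) w = (\<Sum>i\<le>d. hc i p \<odot> hc (d - i) q) w"
  proof (cases "length w = d")
    case True
    have eq: "(\<Sum>i\<le>d. (hc i p \<odot> hc (d - i) q) w) = (\<Sum>i\<le>d. p (take i w) * q (drop i w))"
    proof (intro sum.cong refl)
      fix i assume i: "i \<in> {..d}"
      have "(hc i p \<odot> hc (d - i) q) w = (\<Sum>j\<le>length w. hc i p (take j w) * hc (d - i) q (drop j w))"
        by (rule tm_apply)
      also have "\<dots> = hc i p (take i w) * hc (d - i) q (drop i w)"
        using i True by (intro sum_single) (auto simp: hc_apply min_def)
      also have "\<dots> = p (take i w) * q (drop i w)" using i True by (simp add: hc_apply)
      finally show "(hc i p \<odot> hc (d - i) q) w = p (take i w) * q (drop i w)" .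
    qed
    have "(\<Sum>i\<le>d. hc i p \<odot> hc (d - i) q) w = (\<Sum>i\<le>d. (hc i p \<odot> hc (d - i) q) w)"
      by (rule sum_fun_apply)
    also have "\<dots> = (\<Sum>i\<le>d. p (take i w) * q (drop i w))" by (rule eq)
    also have "\<dots> = (p \<odot> q) w" using True by (simp only: tm_apply)
    also have "\<dots> = hc d (p \<odot> q) w" using True by (simp add: hc_apply)
    finally show ?thesis by simp
  next
    case False
    have z: "(hc i p \<odot> hc (d - i) q) w = 0" if "i \<le> d" for i
    proof -
      have "is_hom (i + (d - i)) (hc i p \<odot> hc (d - i) q)" by (intro is_hom_tm is_hom_hc)
      then show ?thesis using that False by (auto simp: is_hom_def)
    qed
    have "(\<Sum>i\<le>d. hc i p \<odot> hc (d - i) q) w = (\<Sum>i\<le>d. (hc i p \<odot> hc (d - i) q) w)"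
      by (rule sum_fun_apply)
    also have "\<dots> = 0" using z by simp
    finally show ?thesis using False by (simp add: hc_apply)
  qed
qed

lemma wd_tm_wd: "wd u \<odot> wd v = wd (u @ v)"
proof (rule ext)
  fix w
  show "(wd u \<odot> wd v) w = wd (u @ v) w"
  proof (cases "w = u @ v")
    case True
    have "(\<Sum>i\<le>length w. wd u (take i w) * wd v (drop i w)) = wd u (take (length u) w) * wd v (drop (length u) w)"
    proof (rule sum_single)
      fix x assume "x \<in> {..length w}" "x \<noteq> length u"
      then have "take x w \<noteq> u" by auto
      then show "wd u (take x w) * wd v (drop x w) = 0" by (simp add: wd_def)
    qed (use True in auto)
    then show ?thesis using True by (simp add: tm_apply wd_def)
  next
    case False
    have "(wd u \<odot> wd v) w = 0" unfolding tm_apply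
      by (rule sum.neutral) (use False in \<open>auto simp: wd_def\<close>)
    then show ?thesis using False by (simp add: wd_def)
  qed
qed

lemma tm_wd1_apply: "(p \<odot> wd [k]) w = (if w \<noteq> [] \<and> last w = k then p (butlast w) else 0)"
proof -
  have "(\<Sum>i\<le>length w. p (take i w) * wd [k] (drop i w)) = (if w \<noteq> [] \<and> last w = k then p (butlast w) else 0)"
  proof (cases "w \<noteq> [] \<and> last w = k")
    case True
    have "(\<Sum>i\<le>length w. p (take i w) * wd [k] (drop i w)) = p (take (length w - 1) w) * wd [k] (drop (length w - 1) w)"
      by (rule sum_single) (auto simp: wd_def drop_single)
    then show ?thesis using True by (simp add: wd_def drop_single butlast_conv_take)
  next
    case False
    have "(\<Sum>i\<le>length w. p (take i w) * wd [k] (drop i w)) = 0"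
      by (rule sum.neutral) (use False in \<open>auto simp: wd_def drop_single\<close>)
    then show ?thesis using False by auto
  qed
  then show ?thesis by (simp add: tm_apply)
qed

lemma tm_wd1_left_apply: "(wd [k] \<odot> p) w = (if w \<noteq> [] \<and> hd w = k then p (tl w) else 0)"
proof -
  have "(\<Sum>i\<le>length w. wd [k] (take i w) * p (drop i w)) = (if w \<noteq> [] \<and> hd w = k then p (tl w) else 0)"
  proof (cases "w \<noteq> [] \<and> hd w = k")
    case True
    have "(\<Sum>i\<le>length w. wd [k] (take i w) * p (drop i w)) = wd [k] (take 1 w) * p (drop 1 w)"
      by (rule sum_single) (use True in \<open>auto simp: wd_def take_single Suc_le_eq\<close>)
    moreover have "take 1 w = [k]" using True by (cases w) auto
    ultimately show ?thesis using True by (simp add: wd_def drop_Suc)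
  next
    case False
    have "(\<Sum>i\<le>length w. wd [k] (take i w) * p (drop i w)) = 0"
      by (rule sum.neutral) (use False in \<open>auto simp: wd_def take_single\<close>)
    then show ?thesis using False by auto
  qed
  then show ?thesis by (simp add: tm_apply)
qed


lemma TA_simps[simp]:
  "carrier (tensor_algebra n) = tens_carrier n"
  "mult (tensor_algebra n) = tens_mult"
  "add (tensor_algebra n) = (+)"
  "zero (tensor_algebra n) = 0"
  "one (tensor_algebra n) = wd []"
  by (auto simp: tensor_algebra_def fun_eq_iff tens_add_def tens_zero_def tens_const_def wd_def)

lemma tens_const_eq: "tens_const c = smul c (wd [])"
  by (simp add: tens_const_def wd_def fun_eq_iff)

lemma tm_wd_nil_left[simp]: "wd [] \<odot> p = p"
proof (rule ext)
  fix w
  have "(\<Sum>i\<le>length w. wd [] (take i w) * p (drop i w)) = wd [] (take 0 w) * p (drop 0 w)"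
    by (rule sum_single) (auto simp: wd_def)
  then show "(wd [] \<odot> p) w = p w" by (simp add: tm_apply wd_def)
qed

lemma tm_wd_nil_right[simp]: "p \<odot> wd [] = p"
proof (rule ext)
  fix w
  have "(\<Sum>i\<le>length w. p (take i w) * wd [] (drop i w)) = p (take (length w) w) * wd [] (drop (length w) w)"
    by (rule sum_single) (auto simp: wd_def)
  then show "(p \<odot> wd []) w = p w" by (simp add: tm_apply wd_def)
qed

lemma ring_TA: "ring (tensor_algebra n)"
proof (rule ringI)
  show "abelian_group (tensor_algebra n)"
  proof (rule abelian_groupI, goal_cases)
    case (6 x)
    then show ?case by (intro bexI[of _ "-x"]) auto
  qed (auto simp: add.assoc add.commute)
  show "monoid (tensor_algebra n)"
    by (rule monoidI) (auto simp: tm_assoc)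
qed (auto simp: tm_add_left tm_add_right)

lemma TA_a_inv: assumes "x \<in> tens_carrier n" shows "a_inv (tensor_algebra n) x = - x"
proof -
  interpret ring "tensor_algebra n" by (rule ring_TA)
  have "- x \<oplus>\<^bsub>tensor_algebra n\<^esub> x = \<zero>\<^bsub>tensor_algebra n\<^esub>" by simp
  then show ?thesis using assms by (intro minus_equality) auto
qed

lemma TA_a_minus: assumes "x \<in> tens_carrier n" "y \<in> tens_carrier n"
  shows "a_minus (tensor_algebra n) x y = x - y"
  using assms by (simp add: a_minus_def TA_a_inv)


definition lam :: "nat \<Rightarrow> 'k::field tens \<Rightarrow> 'k tens" where
  "lam k p = (\<lambda>w. p (k # w))"

lemma lam_apply[simp]: "lam k p w = p (k # w)" by (simp add: lam_def)

lemma homog_carrier: "q \<in> homog n t \<Longrightarrow> q \<in> tens_carrier n" by (simp add: homog_eq)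
lemma homog_is_hom: "q \<in> homog n t \<Longrightarrow> is_hom t q" by (simp add: homog_eq)
lemma homogI: "q \<in> tens_carrier n \<Longrightarrow> is_hom t q \<Longrightarrow> q \<in> homog n t" by (simp add: homog_eq)

lemma homog_zero[simp]: "0 \<in> homog n t" by (simp add: homog_eq)
lemma homog_add: "p \<in> homog n t \<Longrightarrow> q \<in> homog n t \<Longrightarrow> p + q \<in> homog n t"
  by (auto simp: homog_eq intro: is_hom_add)
lemma homog_smul: "p \<in> homog n t \<Longrightarrow> smul c p \<in> homog n t"
  by (auto simp: homog_eq intro: is_hom_smul)
lemma homog_tm: "p \<in> homog n a \<Longrightarrow> q \<in> homog n b \<Longrightarrow> p \<odot> q \<in> homog n (a + b)"
  by (auto simp: homog_eq intro: is_hom_tm)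
lemma homog_wd: "set u \<subseteq> {..<n} \<Longrightarrow> wd u \<in> homog n (length u)"
  by (auto simp: homog_eq intro: is_hom_wd)
lemma homog_hc: "p \<in> tens_carrier n \<Longrightarrow> hc d p \<in> homog n d"
  by (auto simp: homog_eq intro: is_hom_hc)

lemma homog0_decomp: "q \<in> homog n 0 \<Longrightarrow> q = smul (q []) (wd [])"
  by (auto simp: homog_eq is_hom_def wd_def fun_eq_iff)

lemma is_hom_rho: "is_hom (Suc t) q \<Longrightarrow> is_hom t (rho k q)"
  by (auto simp: is_hom_def)
lemma is_hom_lam: "is_hom (Suc t) q \<Longrightarrow> is_hom t (lam k q)"
  by (auto simp: is_hom_def)

lemma carrier_lam[intro]:
  assumes p: "p \<in> tens_carrier n" and k: "k < n" shows "lam k p \<in> tens_carrier n"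
proof -
  have sub: "{w. lam k p w \<noteq> 0} \<subseteq> tl ` {w. p w \<noteq> 0}"
  proof
    fix w assume "w \<in> {w. lam k p w \<noteq> 0}"
    then have "p (k # w) \<noteq> 0" by simp
    then show "w \<in> tl ` {w. p w \<noteq> 0}" by (intro image_eqI[where x="k # w"]) simp_all
  qed
  have fin: "finite {w. lam k p w \<noteq> 0}"
    by (rule finite_subset[OF sub finite_imageI[OF carrier_finite[OF p]]])
  have "set w \<subseteq> {..<n}" if "lam k p w \<noteq> 0" for w
    using carrierD[OF p, of "k # w"] that by simp
  then show ?thesis using fin unfolding tens_carrier_def by blast
qed

lemma homog_rho: "q \<in> homog n (Suc t) \<Longrightarrow> k < n \<Longrightarrow> rho k q \<in> homog n t"
  by (auto simp: homog_eq intro: is_hom_rho)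
lemma homog_lam: "q \<in> homog n (Suc t) \<Longrightarrow> k < n \<Longrightarrow> lam k q \<in> homog n t"
  by (auto simp: homog_eq intro: is_hom_lam)

lemma rho_decomp:
  assumes q: "q \<in> tens_carrier n" and h: "\<And>w. q w \<noteq> 0 \<Longrightarrow> w \<noteq> []"
  shows "q = (\<Sum>k<n. rho k q \<odot> wd [k])"
proof (rule ext)
  fix w
  have "(\<Sum>k<n. rho k q \<odot> wd [k]) w = (\<Sum>k<n. (rho k q \<odot> wd [k]) w)" by (rule sum_fun_apply)
  also have "\<dots> = (\<Sum>k<n. if w \<noteq> [] \<and> last w = k then q (butlast w @ [k]) else 0)"
    by (simp add: tm_wd1_apply rho_def)
  also have "\<dots> = q w"
  proof (cases "q w = 0")
    case True
    have "(if w \<noteq> [] \<and> last w = k then q (butlast w @ [k]) else 0) = 0" for k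
      using True by (auto simp: append_butlast_last_id)
    then show ?thesis using True by simp
  next
    case False
    then have w: "w \<noteq> []" using h by auto
    have "last w \<in> set w" using w by simp
    then have ln: "last w < n" using carrierD[OF q False] by auto
    have "(\<Sum>k<n. if w \<noteq> [] \<and> last w = k then q (butlast w @ [k]) else 0) = q (butlast w @ [last w])"
      using w ln by (subst sum_single[where a="last w"]) auto
    then show ?thesis using w by simp
  qed
  finally show "q w = (\<Sum>k<n. rho k q \<odot> wd [k]) w" by simp
qed

lemma lam_decomp:
  assumes q: "q \<in> tens_carrier n" and h: "\<And>w. q w \<noteq> 0 \<Longrightarrow> w \<noteq> []"
  shows "q = (\<Sum>k<n. wd [k] \<odot> lam k q)"
proof (rule ext)
  fix w
  have "(\<Sum>k<n. wd [k] \<odot> lam k q) w = (\<Sum>k<n. (wd [k] \<odot> lam k q) w)" by (rule sum_fun_apply)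
  also have "\<dots> = (\<Sum>k<n. if w \<noteq> [] \<and> hd w = k then q (k # tl w) else 0)"
    by (simp add: tm_wd1_left_apply lam_def)
  also have "\<dots> = q w"
  proof (cases "q w = 0")
    case True
    have "(if w \<noteq> [] \<and> hd w = k then q (k # tl w) else 0) = 0" for k
      using True by auto
    then show ?thesis using True by simp
  next
    case False
    then have w: "w \<noteq> []" using h by auto
    have "hd w \<in> set w" using w by simp
    then have ln: "hd w < n" using carrierD[OF q False] by auto
    have "(\<Sum>k<n. if w \<noteq> [] \<and> hd w = k then q (k # tl w) else 0) = q (hd w # tl w)"
      using w ln by (subst sum_single[where a="hd w"]) auto
    then show ?thesis using w by simp
  qed
  finally show "q w = (\<Sum>k<n. wd [k] \<odot> lam k q) w" by simp
qed

lemma homog_Suc_nonnil: "q \<in> homog n (Suc t) \<Longrightarrow> q w \<noteq> 0 \<Longrightarrow> w \<noteq> []"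
  by (auto simp: homog_eq is_hom_def)


declare plus_fun_apply[simp del] zero_fun_apply[simp del] smul_apply[simp del] minus_apply[simp del]
  uminus_apply[simp del] rho_apply[simp del] lam_apply[simp del]

inductive Kp :: "nat \<Rightarrow> 'k::field tens \<Rightarrow> nat \<Rightarrow> 'k tens \<Rightarrow> bool" for n r where
  K_gen: "z \<in> homog n d \<Longrightarrow> Kp n r (Suc (Suc d)) (z \<odot> r)"
| K_right: "Kp n r e p \<Longrightarrow> k < n \<Longrightarrow> Kp n r (Suc e) (p \<odot> wd [k])"
| K_add: "Kp n r e p \<Longrightarrow> Kp n r e q \<Longrightarrow> Kp n r e (p + q)"
| K_zero: "Kp n r e 0"

inductive Ip :: "nat \<Rightarrow> 'k::field tens \<Rightarrow> nat \<Rightarrow> 'k tens \<Rightarrow> bool" for n r where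
  I_K: "Kp n r d p \<Longrightarrow> d \<le> e \<Longrightarrow> Ip n r e p"
| I_add: "Ip n r e p \<Longrightarrow> Ip n r e q \<Longrightarrow> Ip n r e (p + q)"

lemma K_gen': "z \<in> homog n d \<Longrightarrow> e = d + 2 \<Longrightarrow> Kp n r e (z \<odot> r)"
  using K_gen by auto

lemma homog_wd1: "k < n \<Longrightarrow> wd [k] \<in> homog n 1"
  using homog_wd[of "[k]" n] by simp

lemma Kset_carrier: "Kp n r e p \<Longrightarrow> r \<in> tens_carrier n \<Longrightarrow> p \<in> tens_carrier n"
  by (induction rule: Kp.induct) (auto dest: homog_carrier intro: homog_carrier[OF homog_wd1])

lemma Kset_smul: "Kp n r e p \<Longrightarrow> Kp n r e (smul c p)"
proof (induction rule: Kp.induct)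
  case (K_gen z d)
  then show ?case using Kp.K_gen[OF homog_smul[OF K_gen(1), where c=c]] tm_smul_left[of c z r] by metis
next
  case (K_right e p k)
  then show ?case using Kp.K_right[OF K_right(3,2)] tm_smul_left[of c p "wd [k]"] by metis
next
  case (K_add e p q)
  then show ?case using Kp.K_add by (simp add: smul_add)
qed (simp add: Kp.K_zero)

lemma Kset_neg: "Kp n r e p \<Longrightarrow> Kp n r e (- p)"
  using Kset_smul[where c="-1"] by (simp add: smul_neg)
lemma Kset_diff: "Kp n r e p \<Longrightarrow> Kp n r e q \<Longrightarrow> Kp n r e (p - q)"
  using K_add[OF _ Kset_neg] by (metis diff_conv_add_uminus)
lemma Kset_sum: "(\<And>i. i \<in> A \<Longrightarrow> Kp n r e (F i)) \<Longrightarrow> Kp n r e (\<Sum>i\<in>A. F i)"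
  by (induction A rule: infinite_finite_induct) (auto intro: K_add K_zero)

lemma Kset_left: "Kp n r e p \<Longrightarrow> k < n \<Longrightarrow> Kp n r (Suc e) (wd [k] \<odot> p)"
proof (induction rule: Kp.induct)
  case (K_gen z d)
  have "wd [k] \<odot> z \<in> homog n (1 + d)" using K_gen by (intro homog_tm homog_wd1) auto
  then show ?case using Kp.K_gen[of "wd [k] \<odot> z" n "Suc d"] by (simp add: tm_assoc)
next
  case (K_right p e l)
  then show ?case using Kp.K_right[OF K_right(3)[OF K_right(4)] K_right(2)] by (simp add: tm_assoc)
next
  case (K_add e p q)
  then show ?case using Kp.K_add by (simp add: tm_add_right)
qed (simp add: Kp.K_zero)

lemma Kset_right_hom: "q \<in> homog n t \<Longrightarrow> Kp n r e p \<Longrightarrow> Kp n r (e + t) (p \<odot> q)"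
proof (induction t arbitrary: q)
  case 0
  have "q = smul (q []) (wd [])" by (rule homog0_decomp[OF 0(1)])
  then have "p \<odot> q = smul (q []) p" by (metis tm_smul_right tm_wd_nil_right)
  then show ?case using Kset_smul[OF 0(2)] by simp
next
  case (Suc t)
  have "q = (\<Sum>k<n. rho k q \<odot> wd [k])"
    using Suc(2) by (intro rho_decomp) (auto dest: homog_carrier homog_Suc_nonnil)
  then have "p \<odot> q = p \<odot> (\<Sum>k<n. rho k q \<odot> wd [k])" by simp
  also have "\<dots> = (\<Sum>k<n. (p \<odot> rho k q) \<odot> wd [k])"
    by (simp add: tm_sum_right tm_assoc)
  finally have eq: "p \<odot> q = (\<Sum>k<n. (p \<odot> rho k q) \<odot> wd [k])" .
  have "Kp n r (e + Suc t) (\<Sum>k<n. (p \<odot> rho k q) \<odot> wd [k])"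
    using Suc by (auto intro!: Kset_sum K_right[where e="e+t", simplified] homog_rho)
  then show ?case using eq by simp
qed

lemma Kset_left_hom: "q \<in> homog n t \<Longrightarrow> Kp n r e p \<Longrightarrow> Kp n r (t + e) (q \<odot> p)"
proof (induction t arbitrary: q)
  case 0
  have "q = smul (q []) (wd [])" by (rule homog0_decomp[OF 0(1)])
  then have "q \<odot> p = smul (q []) p" by (metis tm_smul_left tm_wd_nil_left)
  then show ?case using Kset_smul[OF 0(2)] by simp
next
  case (Suc t)
  have "q = (\<Sum>k<n. wd [k] \<odot> lam k q)"
    using Suc(2) by (intro lam_decomp) (auto dest: homog_carrier homog_Suc_nonnil)
  then have "q \<odot> p = (\<Sum>k<n. wd [k] \<odot> lam k q) \<odot> p" by simp
  also have "\<dots> = (\<Sum>k<n. wd [k] \<odot> (lam k q \<odot> p))"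
    by (simp add: tm_sum_left tm_assoc)
  finally have eq: "q \<odot> p = (\<Sum>k<n. wd [k] \<odot> (lam k q \<odot> p))" .
  have "Kp n r (Suc t + e) (\<Sum>k<n. wd [k] \<odot> (lam k q \<odot> p))"
    using Suc by (auto intro!: Kset_sum Kset_left[where e="t+e", simplified] homog_lam)
  then show ?case using eq by simp
qed

lemma Kset_small: "Kp n r e p \<Longrightarrow> e < 2 \<Longrightarrow> p = 0"
  by (induction rule: Kp.induct) auto

lemma Kp_zero_family: "\<forall>k<n. Kp n r e ((\<lambda>k. (0::'k::field tens)) k)" by (simp add: K_zero)
lemma sum_zero_family: "(\<Sum>k<n. (\<lambda>k. (0::'k::field tens)) k \<odot> wd [k]) = 0" by simp

lemma Kset_decomp:
  "Kp n r e p \<Longrightarrow> \<exists>z ps. z \<in> homog n (e - 2) \<and> (e < 2 \<longrightarrow> z = 0) \<and>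
      (\<forall>k<n. Kp n r (e - 1) (ps k)) \<and> p = z \<odot> r + (\<Sum>k<n. ps k \<odot> wd [k])"
proof (induction rule: Kp.induct)
  case (K_gen z d)
  show ?case
    apply (rule exI[of _ z], rule exI[of _ "\<lambda>k. 0"])
    using K_gen Kp_zero_family sum_zero_family by simp
next
  case (K_right e p k)
  define ps where "ps = (\<lambda>l. if l = k then p else (0::'a tens))"
  have "(\<Sum>l<n. ps l \<odot> wd [l]) = ps k \<odot> wd [k]"
    using K_right by (intro sum_single) (auto simp: ps_def)
  then have "p \<odot> wd [k] = 0 \<odot> r + (\<Sum>l<n. ps l \<odot> wd [l])" by (simp add: ps_def)
  moreover have "\<forall>l<n. Kp n r (Suc e - 1) (ps l)" using K_right by (auto simp: ps_def intro: K_zero)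
  ultimately show ?case by (intro exI[of _ 0] exI[of _ ps]) auto
next
  case (K_add e p q)
  then obtain z1 ps1 z2 ps2 where
    1: "z1 \<in> homog n (e - 2)" "e < 2 \<longrightarrow> z1 = 0" "\<forall>k<n. Kp n r (e - 1) (ps1 k)" "p = z1 \<odot> r + (\<Sum>k<n. ps1 k \<odot> wd [k])" and
    2: "z2 \<in> homog n (e - 2)" "e < 2 \<longrightarrow> z2 = 0" "\<forall>k<n. Kp n r (e - 1) (ps2 k)" "q = z2 \<odot> r + (\<Sum>k<n. ps2 k \<odot> wd [k])"
    by blast
  have "p + q = (z1 + z2) \<odot> r + (\<Sum>k<n. (ps1 k + ps2 k) \<odot> wd [k])"
    using 1(4) 2(4) by (simp add: tm_add_left sum.distrib algebra_simps)
  moreover have "z1 + z2 \<in> homog n (e - 2)" using 1 2 by (simp add: homog_add)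
  moreover have "e < 2 \<longrightarrow> z1 + z2 = 0" using 1 2 by simp
  moreover have "\<forall>k<n. Kp n r (e - 1) (ps1 k + ps2 k)" using 1(3) 2(3) by (simp add: Kp.K_add)
  ultimately show ?case
    apply (intro exI[of _ "z1 + z2"] exI[of _ "\<lambda>k. ps1 k + ps2 k"])
    by simp
next
  case K_zero
  show ?case
    apply (rule exI[of _ 0], rule exI[of _ "\<lambda>k. 0"])
    using Kp_zero_family sum_zero_family by simp
qed

lemma Kset_hom: "Kp n r e p \<Longrightarrow> r \<in> homog n 2 \<Longrightarrow> is_hom e p"
proof (induction rule: Kp.induct)
  case (K_gen z d)
  then show ?case using is_hom_tm[OF homog_is_hom[OF K_gen(1)] homog_is_hom[OF K_gen(2)]] by simp
next
  case (K_right e p k)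
  then show ?case using is_hom_tm[OF K_right(3)[OF K_right(4)] is_hom_wd[of "[k]"]] by simp
qed (auto intro: is_hom_add)

lemma Kset_deg: "Kp n r e p \<Longrightarrow> deg_le 2 r \<Longrightarrow> deg_le e p"
proof (induction rule: Kp.induct)
  case (K_gen z d)
  then show ?case using deg_le_tm[OF is_hom_deg_le[OF homog_is_hom[OF K_gen(1)]] K_gen(2)] by simp
next
  case (K_right e p k)
  then show ?case using deg_le_tm[OF K_right(3)[OF K_right(4)] is_hom_deg_le[OF is_hom_wd[of "[k]"]]] by simp
qed (auto intro: deg_le_add)

lemma Iset_carrier: "Ip n r e p \<Longrightarrow> r \<in> tens_carrier n \<Longrightarrow> p \<in> tens_carrier n"
  by (induction rule: Ip.induct) (auto dest: Kset_carrier)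

lemma Iset_zero: "Ip n r e 0"
  by (rule I_K[OF K_zero[of n r 0]]) simp

lemma Iset_mono: "Ip n r e p \<Longrightarrow> e \<le> e' \<Longrightarrow> Ip n r e' p"
  by (induction rule: Ip.induct) (auto intro: I_K I_add)

lemma Kset_Iset: "Kp n r e p \<Longrightarrow> Ip n r e p"
  by (rule I_K) auto

lemma Iset_smul: "Ip n r e p \<Longrightarrow> Ip n r e (smul c p)"
  by (induction rule: Ip.induct) (auto intro: I_K I_add Kset_smul simp: smul_add)
lemma Iset_neg: "Ip n r e p \<Longrightarrow> Ip n r e (- p)"
  using Iset_smul[where c="-1"] by (simp add: smul_neg)
lemma Iset_diff: "Ip n r e p \<Longrightarrow> Ip n r e q \<Longrightarrow> Ip n r e (p - q)"
  using I_add[OF _ Iset_neg] by (metis diff_conv_add_uminus)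
lemma Iset_sum: "(\<And>i. i \<in> A \<Longrightarrow> Ip n r e (F i)) \<Longrightarrow> Ip n r e (\<Sum>i\<in>A. F i)"
  by (induction A rule: infinite_finite_induct) (auto intro: I_add Iset_zero)

lemma Iset_right_hom: "Ip n r e p \<Longrightarrow> q \<in> homog n t \<Longrightarrow> Ip n r (e + t) (p \<odot> q)"
proof (induction rule: Ip.induct)
  case (I_K d p e)
  then show ?case using Kset_right_hom[OF I_K(3) I_K(1)] by (auto intro: Ip.I_K)
next
  case (I_add e p q')
  then show ?case by (auto simp: tm_add_left intro: Ip.I_add)
qed

lemma Iset_left_hom: "Ip n r e p \<Longrightarrow> q \<in> homog n t \<Longrightarrow> Ip n r (t + e) (q \<odot> p)"
proof (induction rule: Ip.induct)
  case (I_K d p e)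
  then show ?case using Kset_left_hom[OF I_K(3) I_K(1)] by (auto intro: Ip.I_K)
next
  case (I_add e p q')
  then show ?case by (auto simp: tm_add_right intro: Ip.I_add)
qed

lemma Iset_right: "Ip n r e p \<Longrightarrow> k < n \<Longrightarrow> Ip n r (Suc e) (p \<odot> wd [k])"
  using Iset_right_hom[where q="wd [k]" and t=1] homog_wd[of "[k]" n] by simp

lemma Iset_deg: "Ip n r e p \<Longrightarrow> deg_le 2 r \<Longrightarrow> deg_le e p"
  by (induction rule: Ip.induct) (auto intro: deg_le_add dest: Kset_deg deg_le_mono)

lemma Iset_split: "Ip n r (Suc e) h \<Longrightarrow> \<exists>p q. Kp n r (Suc e) p \<and> Ip n r e q \<and> h = p + q"
proof (induction "Suc e" h rule: Ip.induct)
  case (I_K d p)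
  show ?case
  proof (cases "d = Suc e")
    case True
    then show ?thesis using I_K by (intro exI[of _ p] exI[of _ 0]) (auto intro: Iset_zero)
  next
    case False
    then show ?thesis using I_K by (intro exI[of _ 0] exI[of _ p]) (auto intro: K_zero Ip.I_K)
  qed
next
  case (I_add p q)
  then obtain p1 q1 p2 q2 where "Kp n r (Suc e) p1" "Ip n r e q1" "p = p1 + q1"
    "Kp n r (Suc e) p2" "Ip n r e q2" "q = p2 + q2" by blast
  then show ?case by (intro exI[of _ "p1 + p2"] exI[of _ "q1 + q2"]) (auto intro: K_add Ip.I_add simp: algebra_simps)
qed


lemma carrier_decomp_hc:
  assumes "x \<in> tens_carrier n" obtains B where "x = (\<Sum>d\<le>B. hc d x)"
  using carrier_bounded[OF assms] hc_decomp by blast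

lemma Ip_ideal:
  assumes r: "r \<in> tens_carrier n"
  shows "ideal {h. \<exists>e. Ip n r e h} (tensor_algebra n)"
proof -
  interpret R: ring "tensor_algebra n" by (rule ring_TA)
  let ?S = "{h. \<exists>e. Ip n r e h}"
  have sub: "?S \<subseteq> carrier (tensor_algebra n)" using Iset_carrier r by auto
  have l: "x \<odot> h \<in> ?S" if h: "h \<in> ?S" and x: "x \<in> tens_carrier n" for x h
  proof -
    obtain e where e: "Ip n r e h" using h by auto
    obtain B where B: "x = (\<Sum>d\<le>B. hc d x)" using carrier_decomp_hc[OF x] by blast
    have "x \<odot> h = (\<Sum>d\<le>B. hc d x \<odot> h)" by (subst B) (simp add: tm_sum_left)
    moreover have "Ip n r (B + e) (\<Sum>d\<le>B. hc d x \<odot> h)"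
    proof (rule Iset_sum)
      fix d assume "d \<in> {..B}"
      then show "Ip n r (B + e) (hc d x \<odot> h)"
        using Iset_left_hom[OF e homog_hc[OF x, of d]] by (rule_tac Iset_mono) auto
    qed
    ultimately show ?thesis by auto
  qed
  have rr: "h \<odot> x \<in> ?S" if h: "h \<in> ?S" and x: "x \<in> tens_carrier n" for x h
  proof -
    obtain e where e: "Ip n r e h" using h by auto
    obtain B where B: "x = (\<Sum>d\<le>B. hc d x)" using carrier_decomp_hc[OF x] by blast
    have "h \<odot> x = (\<Sum>d\<le>B. h \<odot> hc d x)" by (subst B) (simp add: tm_sum_right)
    moreover have "Ip n r (e + B) (\<Sum>d\<le>B. h \<odot> hc d x)"
    proof (rule Iset_sum)
      fix d assume "d \<in> {..B}"
      then show "Ip n r (e + B) (h \<odot> hc d x)"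
        using Iset_right_hom[OF e homog_hc[OF x, of d]] by (rule_tac Iset_mono) auto
    qed
    ultimately show ?thesis by auto
  qed
  have sg: "subgroup ?S (add_monoid (tensor_algebra n))"
  proof (rule R.add.subgroupI, goal_cases)
    case 1
    show ?case using sub by simp
  next
    case 2
    show ?case using Iset_zero by blast
  next
    case (3 a)
    then have ac: "a \<in> tens_carrier n" using sub by auto
    obtain e where "Ip n r e a" using 3 by auto
    then have "Ip n r e (- a)" by (rule Iset_neg)
    then show ?case using TA_a_inv[OF ac] by (auto simp: a_inv_def)
  next
    case (4 a b)
    then obtain e1 e2 where "Ip n r e1 a" "Ip n r e2 b" by auto
    then have "Ip n r (max e1 e2) a" "Ip n r (max e1 e2) b" by (auto intro: Iset_mono)
    then show ?case by (auto intro: I_add)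
  qed
  show ?thesis
  proof (rule idealI[OF ring_TA sg], goal_cases)
    case (1 a x)
    then show ?case using l[OF 1(1)] by simp
  next
    case (2 a x)
    then show ?case using rr[OF 2(1)] by simp
  qed
qed

lemma r_in_Ip: "r \<in> tens_carrier n \<Longrightarrow> Ip n r 2 r"
proof -
  have "wd [] \<in> homog n 0" using homog_wd[of "[]" n] by simp
  then have "Kp n r (Suc (Suc 0)) (wd [] \<odot> r)" by (rule K_gen)
  then show "Ip n r 2 r" by (simp add: Kset_Iset numeral_2_eq_2)
qed

lemma genideal_sub_Ip:
  assumes r: "r \<in> tens_carrier n"
  shows "genideal (tensor_algebra n) {r} \<subseteq> {h. \<exists>e. Ip n r e h}"
proof -
  interpret R: ring "tensor_algebra n" by (rule ring_TA)
  show ?thesis by (rule R.genideal_minimal[OF Ip_ideal[OF r]]) (use r_in_Ip[OF r] in auto)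
qed

lemma Kp_sub_genideal:
  assumes "Kp n r e p" and r: "r \<in> tens_carrier n"
  shows "p \<in> genideal (tensor_algebra n) {r}"
  using assms(1)
proof (induction rule: Kp.induct)
  interpret R: ring "tensor_algebra n" by (rule ring_TA)
  interpret I: ideal "genideal (tensor_algebra n) {r}" "tensor_algebra n"
    by (rule R.genideal_ideal) (use r in simp)
  have rI: "r \<in> genideal (tensor_algebra n) {r}" by (rule R.genideal_self') (use r in simp)
  {
    case (K_gen z d)
    then show ?case using I.I_l_closed[OF rI, of z] homog_carrier[OF K_gen] by simp
  next
    case (K_right e p k)
    then show ?case using I.I_r_closed[OF K_right(3), of "wd [k]"] homog_carrier[OF homog_wd1[OF K_right(2)]] by simp
  next
    case (K_add e p q)
    then show ?case using I.a_closed[OF K_add(3,4)] by simp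
  next
    case (K_zero e)
    then show ?case using I.zero_closed by simp
  }
qed

lemma Ip_sub_genideal:
  assumes "Ip n r e p" and r: "r \<in> tens_carrier n"
  shows "p \<in> genideal (tensor_algebra n) {r}"
  using assms(1)
proof (induction rule: Ip.induct)
  interpret R: ring "tensor_algebra n" by (rule ring_TA)
  interpret I: ideal "genideal (tensor_algebra n) {r}" "tensor_algebra n"
    by (rule R.genideal_ideal) (use r in simp)
  {
    case (I_K d p e)
    then show ?case using Kp_sub_genideal r by blast
  next
    case (I_add e p q)
    then show ?case using I.a_closed[OF I_add(3,4)] by simp
  }
qed


lemma rho_add: "rho k (p + q) = rho k p + rho k q" by (simp add: fun_eq_iff rho_apply plus_fun_apply)
lemma rho_diff: "rho k (p - q) = rho k p - rho k q" by (simp add: fun_eq_iff rho_apply minus_apply)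
lemma rho_smul: "rho k (smul c p) = smul c (rho k p)" by (simp add: fun_eq_iff rho_apply smul_apply)
lemma rho_zero[simp]: "rho k 0 = 0" by (simp add: fun_eq_iff rho_apply zero_fun_apply)
lemma rho_sum: "rho k (\<Sum>i\<in>A. F i) = (\<Sum>i\<in>A. rho k (F i))"
  by (simp add: fun_eq_iff rho_apply sum_fun_apply)
lemma rho_wd1: "rho k (p \<odot> wd [l]) = (if k = l then p else 0)"
  by (simp add: fun_eq_iff rho_apply tm_wd1_apply zero_fun_apply)
lemma rho_sum_wd: "k < n \<Longrightarrow> rho k (\<Sum>l<n. ps l \<odot> wd [l]) = ps k"
  by (simp add: rho_sum rho_wd1 sum_single[where a=k])

lemma smul_sum_scalar: "(\<Sum>i\<in>A. smul (c i) p) = smul (\<Sum>i\<in>A. c i) p"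
  by (simp add: fun_eq_iff sum_fun_apply smul_apply sum_distrib_right)
lemma smul_diff: "smul c (p - q) = smul c p - smul c q"
  by (simp add: fun_eq_iff smul_apply minus_apply algebra_simps)
lemma smul_add_scalar: "smul (a + b) p = smul a p + smul b p"
  by (simp add: fun_eq_iff smul_apply plus_fun_apply algebra_simps)
lemma smul_neg_scalar: "smul (- a) p = - smul a p"
  by (simp add: fun_eq_iff smul_apply uminus_apply)
lemma smul_inv: "c \<noteq> 0 \<Longrightarrow> smul (inverse c) (smul c p) = p"
  by (simp add: fun_eq_iff smul_apply)

lemma hc_tm_wd1: "hc (Suc e) (p \<odot> wd [k]) = hc e p \<odot> wd [k]"
  by (auto simp: fun_eq_iff hc_apply tm_wd1_apply)

lemma smul_wd_apply: "smul c (wd u) w = (if w = u then c else 0)"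
  by (simp add: smul_apply wd_def)

lemma quad_eq0: "quad_elem n M = (\<Sum>i<n. \<Sum>j<n. smul (M i j) (wd [i, j]))"
  by (simp add: fun_eq_iff quad_elem_def sum_fun_apply smul_wd_apply)

lemma quad_eq: "quad_elem n M = (\<Sum>j<n. (\<Sum>i<n. smul (M i j) (wd [i])) \<odot> wd [j])"
proof -
  have "(\<Sum>i<n. smul (M i j) (wd [i])) \<odot> wd [j] = (\<Sum>i<n. smul (M i j) (wd [i, j]))" for j
    by (simp add: tm_sum_left tm_smul_left wd_tm_wd)
  then have eq: "(\<Sum>j<n. (\<Sum>i<n. smul (M i j) (wd [i])) \<odot> wd [j]) = (\<Sum>j<n. \<Sum>i<n. smul (M i j) (wd [i, j]))"
    by simp
  have "quad_elem n M = (\<Sum>i<n. \<Sum>j<n. smul (M i j) (wd [i, j]))" by (rule quad_eq0)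
  also have "\<dots> = (\<Sum>j<n. \<Sum>i<n. smul (M i j) (wd [i, j]))" by (rule sum.swap)
  finally show ?thesis using eq by simp
qed

lemma lin_eq: "lin_elem n a = (\<Sum>i<n. smul (a i) (wd [i]))"
  by (simp add: fun_eq_iff lin_elem_def sum_fun_apply smul_wd_apply)

lemma homog_sum: "(\<And>i. i \<in> A \<Longrightarrow> F i \<in> homog n t) \<Longrightarrow> (\<Sum>i\<in>A. F i) \<in> homog n t"
  by (auto simp: homog_eq intro!: carrier_sum is_hom_sum)

locale pbw =
  fixes n :: nat and M :: "nat \<Rightarrow> nat \<Rightarrow> 'k::field" and a :: "nat \<Rightarrow> 'k" and c :: 'k and N :: "nat \<Rightarrow> nat \<Rightarrow> 'k"
  assumes n1: "n \<ge> 1"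
    and MN: "\<And>i k. i < n \<Longrightarrow> k < n \<Longrightarrow> (\<Sum>j<n. M i j * N j k) = (if i = k then 1 else 0)"
    and NM: "\<And>i k. i < n \<Longrightarrow> k < n \<Longrightarrow> (\<Sum>j<n. N i j * M j k) = (if i = k then 1 else 0)"
begin

definition ff :: "'k tens" where "ff = quad_elem n M"
definition l1 :: "'k tens" where "l1 = lin_elem n a"
definition l0 :: "'k tens" where "l0 = smul c (wd [])"
definition gg :: "'k tens" where "gg = ff - l1 - l0"

lemma gg_eq: "(\<lambda>w. quad_elem n M w - lin_elem n a w - tens_const c w) = gg"
  by (simp add: fun_eq_iff gg_def ff_def l1_def l0_def tens_const_eq minus_apply)

lemma ff_sum: "ff = (\<Sum>j<n. (\<Sum>i<n. smul (M i j) (wd [i])) \<odot> wd [j])"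
  by (simp add: ff_def quad_eq)

lemma wd1_homog: "i < n \<Longrightarrow> wd [i] \<in> homog n 1" by (rule homog_wd1)

lemma lin_comb_homog: "(\<Sum>i<n. smul (u i) (wd [i])) \<in> homog n 1"
  by (rule homog_sum) (use homog_smul[OF wd1_homog] in blast)

end


context pbw
begin

lemma ff_homog: "ff \<in> homog n 2"
proof -
  have "(\<Sum>i<n. smul (M i j) (wd [i])) \<odot> wd [j] \<in> homog n (1 + 1)" if "j < n" for j
    by (rule homog_tm[OF lin_comb_homog wd1_homog[OF that]])
  then show ?thesis unfolding ff_sum by (intro homog_sum) (simp add: numeral_2_eq_2)
qed

lemma l1_homog: "l1 \<in> homog n 1" unfolding l1_def lin_eq by (rule lin_comb_homog)
lemma l0_homog: "l0 \<in> homog n 0" unfolding l0_def using homog_smul[OF homog_wd[of "[]" n]] by simp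

lemma ff_carrier: "ff \<in> tens_carrier n" using ff_homog by (rule homog_carrier)
lemma gg_carrier: "gg \<in> tens_carrier n"
  unfolding gg_def using ff_carrier homog_carrier[OF l1_homog] homog_carrier[OF l0_homog] by blast

lemma gg_deg: "deg_le 2 gg"
proof -
  have "deg_le 2 ff" "deg_le 2 l1" "deg_le 2 l0"
    using is_hom_deg_le[OF homog_is_hom[OF ff_homog]]
      deg_le_mono[OF is_hom_deg_le[OF homog_is_hom[OF l1_homog]]]
      deg_le_mono[OF is_hom_deg_le[OF homog_is_hom[OF l0_homog]]] by auto
  then show ?thesis unfolding gg_def by (intro deg_le_diff)
qed

lemma ff_gg: "ff - gg = l1 + l0" by (simp add: gg_def)

lemma ff_nonzero: "ff \<noteq> 0"
proof
  assume z: "ff = 0"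
  have "(\<Sum>j<n. M 0 j * N j 0) = 1" using MN[of 0 0] n1 by simp
  then obtain j where j: "j < n" "M 0 j \<noteq> 0" by (metis (no_types, lifting) mult_zero_left sum.neutral zero_neq_one lessThan_iff)
  have "ff [0, j] = M 0 j" using j n1 unfolding ff_def quad_elem_def
    by (subst sum_single[where a=0]) (auto simp: sum_single[where a=j])
  then show False using z j by (simp add: zero_fun_apply)
qed

lemma z_ff: "z \<odot> ff = (\<Sum>j<n. (\<Sum>i<n. smul (M i j) (z \<odot> wd [i])) \<odot> wd [j])"
  unfolding ff_sum by (simp add: tm_sum_right tm_assoc[symmetric] tm_sum_left tm_smul_right tm_smul_left)

lemma rho_z_ff: "k < n \<Longrightarrow> rho k (z \<odot> ff) = (\<Sum>i<n. smul (M i k) (z \<odot> wd [i]))"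
  unfolding z_ff by (rule rho_sum_wd)

lemma hc_z_gg: assumes z: "z \<in> homog n d" shows "hc (Suc (Suc d)) (z \<odot> gg) = z \<odot> ff"
proof -
  have h1: "is_hom (d + 2) (z \<odot> ff)" by (rule is_hom_tm[OF homog_is_hom[OF z] homog_is_hom[OF ff_homog]])
  have h2: "is_hom (d + 1) (z \<odot> l1)" by (rule is_hom_tm[OF homog_is_hom[OF z] homog_is_hom[OF l1_homog]])
  have h3: "is_hom (d + 0) (z \<odot> l0)" by (rule is_hom_tm[OF homog_is_hom[OF z] homog_is_hom[OF l0_homog]])
  have "z \<odot> gg = z \<odot> ff - z \<odot> l1 - z \<odot> l0" by (simp add: gg_def tm_diff_right)
  then show ?thesis using h1 h2 h3 by (simp add: hc_diff hc_hom hc_hom_other)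
qed

lemma Kp_gg_hc: "Kp n gg e p \<Longrightarrow> Kp n ff e (hc e p)"
proof (induction rule: Kp.induct)
  case (K_gen z d)
  then show ?case using hc_z_gg[OF K_gen] Kp.K_gen[OF K_gen] by simp
next
  case (K_right e p k)
  then show ?case using Kp.K_right[OF K_right(3,2)] by (simp add: hc_tm_wd1)
next
  case (K_add e p q)
  then show ?case using Kp.K_add by (simp add: hc_add)
qed (simp add: K_zero)

lemma Kp_gg_deg: "Kp n gg e p \<Longrightarrow> deg_le e p" using Kset_deg gg_deg by blast
lemma Ip_gg_deg: "Ip n gg e p \<Longrightarrow> deg_le e p" using Iset_deg gg_deg by blast

definition deg_lt :: "nat \<Rightarrow> 'k tens \<Rightarrow> bool" where
  "deg_lt e x \<longleftrightarrow> (\<forall>w. x w \<noteq> 0 \<longrightarrow> length w < e)"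

lemma Kp_ff_lower: "Kp n ff e p \<Longrightarrow> \<exists>q. Kp n gg e q \<and> deg_lt e (p - q)"
proof (induction rule: Kp.induct)
  case (K_gen z d)
  have "z \<odot> ff - z \<odot> gg = z \<odot> (l1 + l0)" by (simp add: tm_diff_right[symmetric] ff_gg)
  moreover have "deg_le (d + 1) (z \<odot> (l1 + l0))"
  proof (rule deg_le_tm)
    show "deg_le d z" using K_gen by (simp add: homog_is_hom is_hom_deg_le)
    show "deg_le 1 (l1 + l0)"
      using is_hom_deg_le[OF homog_is_hom[OF l1_homog]] deg_le_mono[OF is_hom_deg_le[OF homog_is_hom[OF l0_homog]]]
      by (intro deg_le_add) auto
  qed
  ultimately have "deg_lt (Suc (Suc d)) (z \<odot> ff - z \<odot> gg)" by (auto simp: deg_lt_def deg_le_def)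
  then show ?case using Kp.K_gen[OF K_gen] by blast
next
  case (K_right e p k)
  then obtain q where q: "Kp n gg e q" "deg_lt e (p - q)" by blast
  have "p \<odot> wd [k] - q \<odot> wd [k] = (p - q) \<odot> wd [k]" by (simp add: tm_diff_left)
  moreover have "deg_lt (Suc e) ((p - q) \<odot> wd [k])"
    unfolding deg_lt_def
  proof (intro allI impI)
    fix w assume "((p - q) \<odot> wd [k]) w \<noteq> 0"
    then have "w \<noteq> []" "(p - q) (butlast w) \<noteq> 0" by (auto simp: tm_wd1_apply split: if_splits)
    then show "length w < Suc e" using q(2) by (auto simp: deg_lt_def)
  qed
  ultimately show ?case using Kp.K_right[OF q(1) K_right(2)] by auto
next
  case (K_add e p1 p2)
  then obtain q1 q2 where q: "Kp n gg e q1" "deg_lt e (p1 - q1)" "Kp n gg e q2" "deg_lt e (p2 - q2)" by blast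
  have eq: "(p1 + p2) - (q1 + q2) = (p1 - q1) + (p2 - q2)" by simp
  have "deg_lt e ((p1 - q1) + (p2 - q2))"
    using q(2,4) unfolding deg_lt_def by (metis add.right_neutral add_0 plus_fun_apply)
  then have "deg_lt e ((p1 + p2) - (q1 + q2))" by (simp only: eq)
  then show ?case using Kp.K_add[OF q(1,3)] by blast
next
  case (K_zero e)
  have "deg_lt e (0 - 0)" by (simp add: deg_lt_def zero_fun_def)
  then show ?case using Kp.K_zero by blast
qed

end


context pbw
begin

lemma rho_two: "rho l (smul \<alpha> (x \<odot> wd [j1]) + smul \<beta> (x \<odot> wd [j0]))
   = smul ((if l = j1 then \<alpha> else 0) + (if l = j0 then \<beta> else 0)) x"
  by (simp add: rho_add rho_smul rho_wd1 fun_eq_iff smul_apply plus_fun_apply zero_fun_def algebra_simps)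

lemma combine_N:
  assumes j: "j < n" and E: "\<And>l. l < n \<Longrightarrow> ps l = smul (\<mu> l) x - (\<Sum>i<n. smul (M i l) (z \<odot> wd [i]))"
  shows "(\<Sum>l<n. smul (N l j) (ps l)) = smul (\<Sum>l<n. \<mu> l * N l j) x - z \<odot> wd [j]"
proof -
  have "(\<Sum>l<n. smul (N l j) (ps l)) = (\<Sum>l<n. smul (N l j * \<mu> l) x - (\<Sum>i<n. smul (M i l * N l j) (z \<odot> wd [i])))"
    using E by (intro sum.cong refl) (simp add: smul_diff smul_sum smul_smul mult.commute)
  also have "\<dots> = smul (\<Sum>l<n. N l j * \<mu> l) x - (\<Sum>l<n. \<Sum>i<n. smul (M i l * N l j) (z \<odot> wd [i]))"
    by (simp add: sum_subtractf smul_sum_scalar)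
  also have "(\<Sum>l<n. \<Sum>i<n. smul (M i l * N l j) (z \<odot> wd [i])) = (\<Sum>i<n. \<Sum>l<n. smul (M i l * N l j) (z \<odot> wd [i]))"
    by (rule sum.swap)
  also have "\<dots> = (\<Sum>i<n. smul (if i = j then 1 else 0) (z \<odot> wd [i]))"
    using MN j by (intro sum.cong refl) (simp add: smul_sum_scalar)
  also have "\<dots> = z \<odot> wd [j]"
    using j by (subst sum_single[where a=j]) auto
  finally show ?thesis by (simp add: mult.commute)
qed

lemma nu_nonzero:
  assumes j1: "j1 < n" and al: "\<mu> j1 \<noteq> 0"
  shows "\<exists>j<n. (\<Sum>l<n. \<mu> l * N l j) \<noteq> 0"
proof (rule ccontr)
  assume "\<not> (\<exists>j<n. (\<Sum>l<n. \<mu> l * N l j) \<noteq> 0)"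
  then have z: "\<And>j. j < n \<Longrightarrow> (\<Sum>l<n. \<mu> l * N l j) = 0" by auto
  have "0 = (\<Sum>j<n. (\<Sum>l<n. \<mu> l * N l j) * M j j1)" using z by simp
  also have "\<dots> = (\<Sum>j<n. \<Sum>l<n. \<mu> l * (N l j * M j j1))" by (simp add: sum_distrib_right mult.assoc)
  also have "\<dots> = (\<Sum>l<n. \<Sum>j<n. \<mu> l * (N l j * M j j1))" by (rule sum.swap)
  also have "\<dots> = (\<Sum>l<n. \<mu> l * (if l = j1 then 1 else 0))"
    using NM j1 by (intro sum.cong refl) (simp add: sum_distrib_left[symmetric])
  also have "\<dots> = \<mu> j1" using j1 by (subst sum_single[where a=j1]) auto
  finally show False using al by simp
qed

lemma D_lemma:
  assumes n2: "n \<ge> 2"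
  shows "x \<in> homog n m \<Longrightarrow> \<alpha> \<noteq> 0 \<Longrightarrow> j1 < n \<Longrightarrow> j0 < n \<Longrightarrow> j0 \<noteq> j1 \<Longrightarrow>
    Kp n ff (Suc m) (smul \<alpha> (x \<odot> wd [j1]) + smul \<beta> (x \<odot> wd [j0])) \<Longrightarrow> Kp n ff m x"
proof (induction m arbitrary: x \<alpha> \<beta> j0 j1)
  case (0 x \<alpha> \<beta> j0 j1)
  obtain z ps where zps: "z \<in> homog n (Suc 0 - 2)" "Suc 0 < 2 \<longrightarrow> z = 0" "\<forall>k<n. Kp n ff (Suc 0 - 1) (ps k)"
    "smul \<alpha> (x \<odot> wd [j1]) + smul \<beta> (x \<odot> wd [j0]) = z \<odot> ff + (\<Sum>k<n. ps k \<odot> wd [k])"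
    using Kset_decomp[OF 0(6)] by blast
  have "rho j1 (smul \<alpha> (x \<odot> wd [j1]) + smul \<beta> (x \<odot> wd [j0])) = ps j1"
    using zps(2,4) 0(3) by (simp add: rho_add rho_sum_wd)
  then have "smul \<alpha> x = ps j1" using 0(5) by (simp add: rho_two)
  moreover have "ps j1 = 0" using zps(3) 0(3) Kset_small by fastforce
  ultimately have "x = 0" using 0(2) smul_inv[OF 0(2), of x] by simp
  then show ?case by (simp add: K_zero)
next
  case (Suc m x \<alpha> \<beta> j0 j1)
  define X where "X = smul \<alpha> (x \<odot> wd [j1]) + smul \<beta> (x \<odot> wd [j0])"
  obtain z ps where zps: "z \<in> homog n (Suc (Suc m) - 2)" "\<forall>k<n. Kp n ff (Suc (Suc m) - 1) (ps k)"
    "X = z \<odot> ff + (\<Sum>k<n. ps k \<odot> wd [k])"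
    using Kset_decomp[OF Suc(7)[folded X_def]] by blast
  have zh: "z \<in> homog n m" using zps(1) by simp
  have psK: "\<And>k. k < n \<Longrightarrow> Kp n ff (Suc m) (ps k)" using zps(2) by simp
  define \<mu> where "\<mu> = (\<lambda>l. (if l = j1 then \<alpha> else 0) + (if l = j0 then \<beta> else (0::'k)))"
  have E: "ps l = smul (\<mu> l) x - (\<Sum>i<n. smul (M i l) (z \<odot> wd [i]))" if l: "l < n" for l
  proof -
    have "rho l X = rho l (z \<odot> ff) + ps l" using zps(3) l by (simp add: rho_add rho_sum_wd)
    then have "smul (\<mu> l) x = (\<Sum>i<n. smul (M i l) (z \<odot> wd [i])) + ps l"
      using l by (simp add: X_def rho_two rho_z_ff \<mu>_def)
    then show ?thesis by (simp add: algebra_simps)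
  qed
  define \<nu> where "\<nu> = (\<lambda>j. \<Sum>l<n. \<mu> l * N l j)"
  have Y: "Kp n ff (Suc m) (smul (\<nu> j) x - z \<odot> wd [j])" if j: "j < n" for j
  proof -
    have "Kp n ff (Suc m) (\<Sum>l<n. smul (N l j) (ps l))" using psK by (intro Kset_sum Kset_smul) auto
    then show ?thesis using combine_N[OF j E] by (simp add: \<nu>_def)
  qed
  have "\<mu> j1 \<noteq> 0" using Suc(3,6) by (simp add: \<mu>_def)
  then obtain j0' where j0': "j0' < n" "\<nu> j0' \<noteq> 0" using nu_nonzero[OF Suc(4)] by (auto simp: \<nu>_def)
  define j1' where "j1' = (if j0' = 0 then 1 else (0::nat))"
  have j1': "j1' < n" "j1' \<noteq> j0'" using n2 by (auto simp: j1'_def)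
  have W: "smul (\<nu> j1') (smul (\<nu> j0') x - z \<odot> wd [j0']) - smul (\<nu> j0') (smul (\<nu> j1') x - z \<odot> wd [j1'])
      = smul (\<nu> j0') (z \<odot> wd [j1']) + smul (- \<nu> j1') (z \<odot> wd [j0'])"
    by (simp add: fun_eq_iff smul_apply minus_apply plus_fun_apply algebra_simps)
  have "Kp n ff (Suc m) (smul (\<nu> j1') (smul (\<nu> j0') x - z \<odot> wd [j0']) - smul (\<nu> j0') (smul (\<nu> j1') x - z \<odot> wd [j1']))"
    by (rule Kset_diff[OF Kset_smul[OF Y[OF j0'(1)]] Kset_smul[OF Y[OF j1'(1)]]])
  then have "Kp n ff (Suc m) (smul (\<nu> j0') (z \<odot> wd [j1']) + smul (- \<nu> j1') (z \<odot> wd [j0']))" by (simp only: W)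
  then have zK: "Kp n ff m z" using Suc.IH[OF zh j0'(2) j1'(1) j0'(1) j1'(2)[symmetric]] by simp
  have "Kp n ff (Suc m) ((smul (\<nu> j0') x - z \<odot> wd [j0']) + z \<odot> wd [j0'])"
    using Y[OF j0'(1)] K_right[OF zK j0'(1)] by (rule K_add)
  then have "Kp n ff (Suc m) (smul (\<nu> j0') x)" by simp
  then have "Kp n ff (Suc m) (smul (inverse (\<nu> j0')) (smul (\<nu> j0') x))" by (rule Kset_smul)
  then show ?case using smul_inv[OF j0'(2)] by simp
qed

end


lemma ab3: "(A::'a::ab_group_add) + B = A + C + (B - C)" by (simp add: algebra_simps)

context pbw
begin

definition TT :: "nat \<Rightarrow> 'k tens \<Rightarrow> bool" where
  "TT e x \<longleftrightarrow> (\<exists>ps r. (\<forall>k<n. Kp n gg e (ps k)) \<and> Ip n gg e r \<and> x = (\<Sum>k<n. ps k \<odot> wd [k]) + r)"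

lemma TT_add: "TT e x \<Longrightarrow> TT e y \<Longrightarrow> TT e (x + y)"
proof -
  assume "TT e x" "TT e y"
  then obtain ps1 r1 ps2 r2 where 1: "\<forall>k<n. Kp n gg e (ps1 k)" "Ip n gg e r1" "x = (\<Sum>k<n. ps1 k \<odot> wd [k]) + r1"
    and 2: "\<forall>k<n. Kp n gg e (ps2 k)" "Ip n gg e r2" "y = (\<Sum>k<n. ps2 k \<odot> wd [k]) + r2"
    unfolding TT_def by blast
  have "x + y = (\<Sum>k<n. (ps1 k + ps2 k) \<odot> wd [k]) + (r1 + r2)"
    using 1(3) 2(3) by (simp add: tm_add_left sum.distrib algebra_simps)
  moreover have "\<forall>k<n. Kp n gg e (ps1 k + ps2 k)" using 1(1) 2(1) by (simp add: K_add)
  moreover have "Ip n gg e (r1 + r2)" using 1(2) 2(2) by (rule I_add)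
  ultimately show ?thesis unfolding TT_def
    by (intro exI[of _ "\<lambda>k. ps1 k + ps2 k"] exI[of _ "r1 + r2"]) simp
qed

lemma TT_zero: "TT e 0"
proof -
  have "(0::'k tens) = (\<Sum>k<n. (\<lambda>k. 0) k \<odot> wd [k]) + 0" by simp
  moreover have "\<forall>k<n. Kp n gg e ((\<lambda>k. (0::'k tens)) k)" by (simp add: K_zero)
  ultimately show ?thesis unfolding TT_def using Iset_zero
    by (intro exI[of _ "\<lambda>k. 0"] exI[of _ 0]) simp
qed

lemma TT_sum_wd: "(\<forall>k<n. Kp n gg e (ps k)) \<Longrightarrow> TT e (\<Sum>k<n. ps k \<odot> wd [k])"
  unfolding TT_def using Iset_zero by (intro exI[of _ ps] exI[of _ 0]) simp

lemma TT_Ip: "Ip n gg e r \<Longrightarrow> TT e r"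
proof -
  assume r: "Ip n gg e r"
  have "r = (\<Sum>k<n. (\<lambda>k. 0) k \<odot> wd [k]) + r" by simp
  moreover have "\<forall>k<n. Kp n gg e ((\<lambda>k. (0::'k tens)) k)" by (simp add: K_zero)
  ultimately show ?thesis unfolding TT_def using r
    by (intro exI[of _ "\<lambda>k. 0"] exI[of _ r]) simp
qed

lemma key_identity0: "u \<odot> (G + L) \<odot> b \<odot> G = u \<odot> G \<odot> b \<odot> (G + L) + (u \<odot> L \<odot> b \<odot> G - u \<odot> G \<odot> b \<odot> L)"
proof -
  have l: "u \<odot> (G + L) \<odot> b \<odot> G = u \<odot> G \<odot> b \<odot> G + u \<odot> L \<odot> b \<odot> G"
    by (simp only: tm_add_left tm_add_right)
  have r: "u \<odot> G \<odot> b \<odot> (G + L) = u \<odot> G \<odot> b \<odot> G + u \<odot> G \<odot> b \<odot> L"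
    by (simp only: tm_add_right)
  show ?thesis unfolding l r by (rule ab3)
qed

lemma key_identity: "u \<odot> ff \<odot> b \<odot> gg = u \<odot> gg \<odot> b \<odot> ff + (u \<odot> (l1 + l0) \<odot> b \<odot> gg - u \<odot> gg \<odot> b \<odot> (l1 + l0))"
proof -
  have ff: "ff = gg + (l1 + l0)" using ff_gg by (simp add: algebra_simps)
  show ?thesis unfolding ff by (rule key_identity0)
qed

lemma Z_lemma: "Kp n ff d z \<Longrightarrow> b \<in> homog n t \<Longrightarrow> TT (d + t + 1) (z \<odot> b \<odot> gg)"
proof (induction arbitrary: b t rule: Kp.induct)
  case (K_gen u d)
  let ?E = "Suc (Suc d) + t + 1"
  have ugb: "Kp n gg (Suc (Suc d) + t) (u \<odot> gg \<odot> b)"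
    by (rule Kset_right_hom[OF K_gen(2) K_gen'[OF K_gen(1) refl, simplified]])
  have t1: "TT ?E (u \<odot> gg \<odot> b \<odot> ff)"
  proof -
    have "u \<odot> gg \<odot> b \<odot> ff = (\<Sum>j<n. (\<Sum>i<n. smul (M i j) (u \<odot> gg \<odot> b \<odot> wd [i])) \<odot> wd [j])"
      by (rule z_ff)
    moreover have "\<forall>j<n. Kp n gg ?E (\<Sum>i<n. smul (M i j) (u \<odot> gg \<odot> b \<odot> wd [i]))"
      using K_right[OF ugb] by (auto intro!: Kset_sum Kset_smul)
    ultimately show ?thesis using TT_sum_wd by simp
  qed
  have hl1: "u \<odot> l1 \<odot> b \<in> homog n (d + 1 + t)" using K_gen(1) K_gen(2) l1_homog by (intro homog_tm)
  have hl0: "u \<odot> l0 \<odot> b \<in> homog n (d + 0 + t)" using K_gen(1) K_gen(2) l0_homog by (intro homog_tm)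
  have t2: "Ip n gg ?E (u \<odot> (l1 + l0) \<odot> b \<odot> gg)"
  proof -
    have "u \<odot> (l1 + l0) \<odot> b \<odot> gg = u \<odot> l1 \<odot> b \<odot> gg + u \<odot> l0 \<odot> b \<odot> gg"
      by (simp add: tm_add_left tm_add_right)
    moreover have "Ip n gg ?E (u \<odot> l1 \<odot> b \<odot> gg)" using K_gen'[OF hl1 refl] by (intro I_K) auto
    moreover have "Ip n gg ?E (u \<odot> l0 \<odot> b \<odot> gg)" using K_gen'[OF hl0 refl] by (intro I_K) auto
    ultimately show ?thesis by (simp add: I_add)
  qed
  have t3: "Ip n gg ?E (u \<odot> gg \<odot> b \<odot> (l1 + l0))"
  proof -
    have "u \<odot> gg \<odot> b \<odot> (l1 + l0) = u \<odot> gg \<odot> b \<odot> l1 + u \<odot> gg \<odot> b \<odot> l0"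
      by (simp add: tm_add_right)
    moreover have "Ip n gg ?E (u \<odot> gg \<odot> b \<odot> l1)" using Kset_right_hom[OF l1_homog ugb] by (intro I_K) auto
    moreover have "Ip n gg ?E (u \<odot> gg \<odot> b \<odot> l0)" using Kset_right_hom[OF l0_homog ugb] by (intro I_K) auto
    ultimately show ?thesis by (simp add: I_add)
  qed
  have "TT ?E (u \<odot> gg \<odot> b \<odot> ff + (u \<odot> (l1 + l0) \<odot> b \<odot> gg - u \<odot> gg \<odot> b \<odot> (l1 + l0)))"
    by (rule TT_add[OF t1 TT_Ip[OF Iset_diff[OF t2 t3]]])
  then show ?case by (simp add: key_identity)
next
  case (K_right e p k)
  have "wd [k] \<odot> b \<in> homog n (1 + t)" using K_right by (intro homog_tm homog_wd1)
  then have "TT (e + (1 + t) + 1) (p \<odot> (wd [k] \<odot> b) \<odot> gg)" by (rule K_right.IH)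
  then show ?case by (simp add: tm_assoc)
next
  case (K_add e p q)
  then show ?case using TT_add[OF K_add.IH(1)[OF K_add(5)] K_add.IH(2)[OF K_add(5)]]
    by (simp add: tm_add_left)
next
  case (K_zero e)
  then show ?case by (simp add: TT_zero)
qed

end


lemma replicate_of_set0: "set w \<subseteq> {..<Suc 0} \<Longrightarrow> w = replicate (length w) 0"
  by (induction w) auto

context pbw
begin

lemma homog_n1: assumes n: "n = 1" and z: "z \<in> homog n d"
  shows "z = smul (z (replicate d 0)) (wd (replicate d 0))"
proof (rule ext)
  fix w
  show "z w = smul (z (replicate d 0)) (wd (replicate d 0)) w"
  proof (cases "z w = 0")
    case True
    then show ?thesis by (auto simp: smul_wd_apply)
  next
    case False
    then have "length w = d" using z by (auto simp: homog_eq is_hom_def)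
    moreover have "set w \<subseteq> {..<Suc 0}" using carrierD[OF homog_carrier[OF z] False] n by simp
    ultimately have "w = replicate d 0" using replicate_of_set0 by metis
    then show ?thesis by (simp add: smul_wd_apply)
  qed
qed

lemma ff_n1: assumes "n = 1" shows "ff = smul (M 0 0) (wd [0, 0])"
proof -
  have "quad_elem n M = smul (M 0 0) (wd [0, 0])" using assms by (simp add: quad_eq0)
  then show ?thesis by (simp add: ff_def)
qed
lemma l1_n1: assumes "n = 1" shows "l1 = smul (a 0) (wd [0])"
proof -
  have "lin_elem n a = smul (a 0) (wd [0])" using assms by (simp add: lin_eq)
  then show ?thesis by (simp add: l1_def)
qed
lemma M00_n1: "n = 1 \<Longrightarrow> M 0 0 \<noteq> 0"
  using MN[of 0 0] by auto

lemma gg_comm_n1: assumes "n = 1" shows "gg \<odot> wd [0] = wd [0] \<odot> gg"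
  unfolding gg_def ff_n1[OF assms] l1_n1[OF assms] l0_def
  by (simp add: tm_diff_left tm_diff_right tm_smul_left tm_smul_right wd_tm_wd)

lemma Kp_char_n1: assumes n: "n = 1"
  shows "Kp n gg e p \<Longrightarrow> \<exists>C. p = smul C (wd (replicate (e - 2) 0) \<odot> gg) \<and> (e < 2 \<longrightarrow> C = 0)"
proof (induction rule: Kp.induct)
  case (K_gen z d)
  have "z \<odot> gg = smul (z (replicate d 0)) (wd (replicate d 0) \<odot> gg)"
    by (subst homog_n1[OF n K_gen]) (simp add: tm_smul_left)
  then show ?case by auto
next
  case (K_right e p k)
  then obtain C where C: "p = smul C (wd (replicate (e - 2) 0) \<odot> gg)" "e < 2 \<longrightarrow> C = 0" by blast
  have k: "k = 0" using K_right n by simp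
  show ?case
  proof (cases "e < 2")
    case True
    then have "p \<odot> wd [k] = smul 0 (wd (replicate (Suc e - 2) 0) \<odot> gg)" using C by simp
    then show ?thesis by blast
  next
    case False
    have "p \<odot> wd [k] = smul C (wd (replicate (e - 2) 0) \<odot> (gg \<odot> wd [0]))"
      using C k by (simp add: tm_smul_left tm_assoc)
    also have "\<dots> = smul C (wd (replicate (e - 2) 0 @ [0]) \<odot> gg)"
      by (simp add: gg_comm_n1[OF n] tm_assoc[symmetric] wd_tm_wd)
    also have "replicate (e - 2) 0 @ [0::nat] = replicate (Suc e - 2) 0"
    proof -
      have "Suc e - 2 = Suc (e - 2)" using False by arith
      then show ?thesis by (simp add: replicate_append_same)
    qed
    finally show ?thesis using False by auto
  qed
next
  case (K_add e p q)
  then obtain C1 C2 where "p = smul C1 (wd (replicate (e - 2) 0) \<odot> gg)" "e < 2 \<longrightarrow> C1 = 0"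
    "q = smul C2 (wd (replicate (e - 2) 0) \<odot> gg)" "e < 2 \<longrightarrow> C2 = 0" by blast
  then have "p + q = smul (C1 + C2) (wd (replicate (e - 2) 0) \<odot> gg) \<and> (e < 2 \<longrightarrow> C1 + C2 = 0)"
    by (simp add: smul_add_scalar)
  then show ?case by blast
next
  case (K_zero e)
  have "(0::'k tens) = smul 0 (wd (replicate (e - 2) 0) \<odot> gg)" by simp
  then show ?case by blast
qed

lemma L_n1: assumes n: "n = 1" and p: "Kp n gg e p" and h: "hc e p = 0" shows "p = 0"
proof -
  obtain C where C: "p = smul C (wd (replicate (e - 2) 0) \<odot> gg)" "e < 2 \<longrightarrow> C = 0"
    using Kp_char_n1[OF n p] by blast
  show ?thesis
  proof (cases "e < 2")
    case True then show ?thesis using C by simp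
  next
    case False
    then obtain d where d: "e = Suc (Suc d)" by (metis add_2_eq_Suc le_add_diff_inverse not_less)
    have "set (replicate d (0::nat)) \<subseteq> {..<n}" using n by (cases d) auto
    then have hom: "wd (replicate d 0) \<in> homog n d" using homog_wd[of "replicate d 0" n] by simp
    have "hc e p = smul C (wd (replicate d 0) \<odot> ff)"
      using C d by (simp add: hc_smul hc_z_gg[OF hom])
    also have "\<dots> = smul (C * M 0 0) (wd (replicate d 0 @ [0, 0]))"
      by (simp add: ff_n1[OF n] tm_smul_right wd_tm_wd smul_smul mult.commute)
    finally have "smul (C * M 0 0) (wd (replicate d 0 @ [0, 0])) = 0" using h by simp
    then have "smul (C * M 0 0) (wd (replicate d 0 @ [0, 0])) (replicate d 0 @ [0, 0]) = 0"
      by (simp add: zero_fun_def)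
    then have "C * M 0 0 = 0" by (simp add: smul_wd_apply)
    then have "C = 0" using M00_n1[OF n] by simp
    then show ?thesis using C by simp
  qed
qed

end


context pbw
begin

lemma combine_M:
  assumes l: "l < n"
  shows "(\<Sum>j<n. smul (N j l) (smul (M j 0) z + (\<Sum>i<n. smul (M i j) (x \<odot> wd [i]))))
       = smul (\<Sum>j<n. M j 0 * N j l) z + x \<odot> wd [l]"
proof -
  have "(\<Sum>j<n. smul (N j l) (smul (M j 0) z + (\<Sum>i<n. smul (M i j) (x \<odot> wd [i]))))
      = (\<Sum>j<n. smul (M j 0 * N j l) z + (\<Sum>i<n. smul (M i j * N j l) (x \<odot> wd [i])))"
    by (intro sum.cong refl) (simp add: smul_add smul_sum smul_smul mult.commute)
  also have "\<dots> = smul (\<Sum>j<n. M j 0 * N j l) z + (\<Sum>j<n. \<Sum>i<n. smul (M i j * N j l) (x \<odot> wd [i]))"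
    by (simp add: sum.distrib smul_sum_scalar)
  also have "(\<Sum>j<n. \<Sum>i<n. smul (M i j * N j l) (x \<odot> wd [i])) = (\<Sum>i<n. \<Sum>j<n. smul (M i j * N j l) (x \<odot> wd [i]))"
    by (rule sum.swap)
  also have "\<dots> = (\<Sum>i<n. smul (if i = l then 1 else 0) (x \<odot> wd [i]))"
    using MN l by (intro sum.cong refl) (simp add: smul_sum_scalar)
  also have "\<dots> = x \<odot> wd [l]"
    using l by (subst sum_single[where a=l]) auto
  finally show ?thesis .
qed

lemma col0_nonzero: "\<exists>j<n. M j 0 \<noteq> 0"
proof (rule ccontr)
  assume "\<not> (\<exists>j<n. M j 0 \<noteq> 0)"
  then have "(\<Sum>j<n. N 0 j * M j 0) = 0" by simp
  then show False using NM[of 0 0] n1 by simp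
qed

lemma hc_KD:
  assumes z: "z \<in> homog n d"
  shows "hc (Suc (Suc d)) (z \<odot> gg + (\<Sum>k<n. pk k \<odot> wd [k])) = z \<odot> ff + (\<Sum>k<n. hc (Suc d) (pk k) \<odot> wd [k])"
  by (simp add: hc_add hc_sum hc_z_gg[OF z] hc_tm_wd1)

lemma smul_ff_zero: "smul C ff = 0 \<Longrightarrow> C = 0"
proof (rule ccontr)
  assume "smul C ff = 0" "C \<noteq> 0"
  then have "smul (inverse C) (smul C ff) = 0" by simp
  then show False using smul_inv[OF \<open>C \<noteq> 0\<close>] ff_nonzero by simp
qed

lemma L_lemma: "Kp n gg e p \<Longrightarrow> hc e p = 0 \<Longrightarrow> Ip n gg (e - 1) p"
proof (induction e arbitrary: p rule: less_induct)
  case (less e p)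
  have "e < 2 \<or> e = 2 \<or> e = Suc (Suc (Suc (e - 3)))" by arith
  then consider (a) "e < 2" | (b) "e = 2" | (c) e' where "e = Suc (Suc (Suc e'))" by blast
  then show ?case
  proof cases
    case a
    then have "p = 0" using Kset_small less.prems(1) by blast
    then show ?thesis by (simp add: Iset_zero)
  next
    case b
    obtain z ps where zps: "z \<in> homog n 0" "\<forall>k<n. Kp n gg 1 (ps k)"
      "p = z \<odot> gg + (\<Sum>k<n. ps k \<odot> wd [k])"
      using Kset_decomp[OF less.prems(1)] b by auto
    have "ps k = 0" if "k < n" for k using zps(2) that Kset_small by fastforce
    then have p: "p = z \<odot> gg" using zps(3) by simp
    have "hc (Suc (Suc 0)) p = z \<odot> ff" using p hc_z_gg[OF zps(1)] by simp
    then have hz: "z \<odot> ff = 0" using less.prems(2) b by (simp add: numeral_2_eq_2)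
    have zeq: "z = smul (z []) (wd [])" by (rule homog0_decomp[OF zps(1)])
    have "z \<odot> ff = smul (z []) ff" by (subst zeq) (simp add: tm_smul_left)
    then have "smul (z []) ff = 0" using hz by simp
    then have "z [] = 0" by (rule smul_ff_zero)
    then have "z = 0" using zeq by simp
    then show ?thesis using p by (simp add: Iset_zero)
  next
    case c
    show ?thesis
    proof (cases "n = 1")
      case True
      then have "p = 0" using L_n1 less.prems by blast
      then show ?thesis by (simp add: Iset_zero)
    next
      case False
      then have n2: "n \<ge> 2" using n1 by simp
      obtain z pk where zpk: "z \<in> homog n (Suc e')" "\<forall>k<n. Kp n gg (Suc (Suc e')) (pk k)"
        "p = z \<odot> gg + (\<Sum>k<n. pk k \<odot> wd [k])"
        using Kset_decomp[OF less.prems(1)] c by auto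
      obtain x q where xq: "x \<in> homog n e'" "\<forall>l<n. Kp n gg (Suc e') (q l)"
        "pk 0 = x \<odot> gg + (\<Sum>l<n. q l \<odot> wd [l])"
        using Kset_decomp[of n gg "Suc (Suc e')" "pk 0"] zpk(2) n1 by auto
      have hp: "hc e p = z \<odot> ff + (\<Sum>k<n. hc (Suc (Suc e')) (pk k) \<odot> wd [k])"
        using c zpk(3) hc_KD[OF zpk(1)] by simp
      have hp0: "hc (Suc (Suc e')) (pk 0) = x \<odot> ff + (\<Sum>l<n. hc (Suc e') (q l) \<odot> wd [l])"
        using xq(3) hc_KD[OF xq(1)] by simp
      have r0: "rho 0 (hc e p) = (\<Sum>i<n. smul (M i 0) (z \<odot> wd [i])) + x \<odot> ff + (\<Sum>l<n. hc (Suc e') (q l) \<odot> wd [l])"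
        using hp hp0 n1 by (simp add: rho_add rho_z_ff rho_sum_wd add.assoc)
      define A where "A = (\<lambda>j. smul (M j 0) z + (\<Sum>i<n. smul (M i j) (x \<odot> wd [i])))"
      have AK: "Kp n ff (Suc e') (A j)" if j: "j < n" for j
      proof -
        have "rho j (rho 0 (hc e p)) = 0" using less.prems(2) by simp
        moreover have "rho j (\<Sum>i<n. smul (M i 0) (z \<odot> wd [i])) = smul (M j 0) z"
          using j by (simp add: rho_sum rho_smul rho_wd1 sum_single[where a=j])
        ultimately have "A j + hc (Suc e') (q j) = 0"
          using j r0 by (simp add: rho_add rho_z_ff rho_sum_wd A_def add.assoc)
        then have "A j = - hc (Suc e') (q j)" by (simp add: eq_neg_iff_add_eq_0)
        moreover have "Kp n ff (Suc e') (hc (Suc e') (q j))" using xq(2) j Kp_gg_hc by blast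
        ultimately show ?thesis by (simp add: Kset_neg)
      qed
      define Q where "Q = (\<lambda>l. \<Sum>j<n. M j 0 * N j l)"
      have BK: "Kp n ff (Suc e') (smul (Q l) z + x \<odot> wd [l])" if l: "l < n" for l
      proof -
        have "Kp n ff (Suc e') (\<Sum>j<n. smul (N j l) (A j))" using AK by (intro Kset_sum Kset_smul) auto
        then show ?thesis using combine_M[OF l, of z x] by (simp add: A_def Q_def)
      qed
      obtain j1 where j1: "j1 < n" "M j1 0 \<noteq> 0" using col0_nonzero by blast
      obtain l0 where l0: "l0 < n" "Q l0 \<noteq> 0"
        using nu_nonzero[of j1 "\<lambda>j. M j 0", OF j1] by (auto simp: Q_def)
      define l1 where "l1 = (if l0 = 0 then 1 else (0::nat))"
      have l1: "l1 < n" "l1 \<noteq> l0" using n2 by (auto simp: l1_def)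
      have W: "smul (Q l0) (smul (Q l1) z + x \<odot> wd [l1]) - smul (Q l1) (smul (Q l0) z + x \<odot> wd [l0])
          = smul (Q l0) (x \<odot> wd [l1]) + smul (- Q l1) (x \<odot> wd [l0])"
        by (simp add: fun_eq_iff smul_apply minus_apply plus_fun_apply algebra_simps)
      have "Kp n ff (Suc e') (smul (Q l0) (smul (Q l1) z + x \<odot> wd [l1]) - smul (Q l1) (smul (Q l0) z + x \<odot> wd [l0]))"
        by (rule Kset_diff[OF Kset_smul[OF BK[OF l1(1)]] Kset_smul[OF BK[OF l0(1)]]])
      then have "Kp n ff (Suc e') (smul (Q l0) (x \<odot> wd [l1]) + smul (- Q l1) (x \<odot> wd [l0]))"
        by (simp only: W)
      then have xK: "Kp n ff e' x" using D_lemma[OF n2 xq(1) l0(2) l1(1) l0(1) l1(2)[symmetric]] by simp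
      have "Kp n ff (Suc e') ((smul (Q l0) z + x \<odot> wd [l0]) - x \<odot> wd [l0])"
        by (rule Kset_diff[OF BK[OF l0(1)] K_right[OF xK l0(1)]])
      then have "Kp n ff (Suc e') (smul (Q l0) z)" by simp
      then have "Kp n ff (Suc e') (smul (inverse (Q l0)) (smul (Q l0) z))" by (rule Kset_smul)
      then have zK: "Kp n ff (Suc e') z" using smul_inv[OF l0(2)] by simp
      have "TT (Suc e' + 0 + 1) (z \<odot> wd [] \<odot> gg)"
        by (rule Z_lemma[OF zK]) (use homog_wd[of "[]" n] in simp)
      then obtain ps r where psr: "\<forall>k<n. Kp n gg (Suc (Suc e')) (ps k)" "Ip n gg (Suc (Suc e')) r"
        "z \<odot> gg = (\<Sum>k<n. ps k \<odot> wd [k]) + r"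
        unfolding TT_def by auto
      define P where "P = (\<lambda>k. ps k + pk k)"
      have PK: "Kp n gg (Suc (Suc e')) (P k)" if "k < n" for k
        using psr(1) zpk(2) that by (simp add: P_def K_add)
      have peq: "p = (\<Sum>k<n. P k \<odot> wd [k]) + r"
        using zpk(3) psr(3) by (simp add: P_def tm_add_left sum.distrib algebra_simps)
      have hr: "hc e r = 0" using Ip_gg_deg[OF psr(2)] c by (intro hc_deg_gt) auto
      have hP: "hc (Suc (Suc e')) (P k) = 0" if k: "k < n" for k
      proof -
        have "hc e p = (\<Sum>k<n. hc (Suc (Suc e')) (P k) \<odot> wd [k])"
          using peq hr c by (simp add: hc_add hc_sum hc_tm_wd1)
        then have "rho k (hc e p) = hc (Suc (Suc e')) (P k)" using k by (simp add: rho_sum_wd)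
        then show ?thesis using less.prems(2) by simp
      qed
      have "Ip n gg (Suc e') (P k)" if k: "k < n" for k
        using less.IH[of "Suc (Suc e')" "P k"] c PK[OF k] hP[OF k] by simp
      then have "Ip n gg (Suc (Suc e')) (\<Sum>k<n. P k \<odot> wd [k])"
        by (intro Iset_sum) (auto intro: Iset_right)
      then have "Ip n gg (Suc (Suc e')) p" using peq psr(2) by (simp add: I_add)
      then show ?thesis using c by simp
    qed
  qed
qed

end


context pbw
begin

lemma Ip_hc_le: "Ip n gg e h \<Longrightarrow> e \<le> d \<Longrightarrow> Kp n ff d (hc d h)"
proof (induction rule: Ip.induct)
  case (I_K d' p e)
  show ?case
  proof (cases "d' = d")
    case True
    then show ?thesis using Kp_gg_hc[OF I_K(1)] by simp
  next
    case False
    then have "hc d p = 0" using I_K Kp_gg_deg by (intro hc_deg_gt) auto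
    then show ?thesis by (simp add: K_zero)
  qed
next
  case (I_add e p q)
  then show ?case by (simp add: hc_add K_add)
qed

lemma P_lemma: "Ip n gg e h \<Longrightarrow> deg_le d h \<Longrightarrow> Kp n ff d (hc d h)"
proof (induction e arbitrary: h)
  case 0
  then show ?case using Ip_hc_le by blast
next
  case (Suc e0)
  show ?case
  proof (cases "Suc e0 \<le> d")
    case True
    then show ?thesis using Ip_hc_le Suc.prems(1) by blast
  next
    case False
    obtain p q where pq: "Kp n gg (Suc e0) p" "Ip n gg e0 q" "h = p + q"
      using Iset_split[OF Suc.prems(1)] by blast
    have "hc (Suc e0) h = 0" using Suc.prems(2) False by (intro hc_deg_gt) auto
    moreover have "hc (Suc e0) q = 0" using Ip_gg_deg[OF pq(2)] by (intro hc_deg_gt) auto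
    ultimately have "hc (Suc e0) p = 0" using pq(3) by (simp add: hc_add)
    then have "Ip n gg e0 p" using L_lemma[OF pq(1)] by simp
    then have "Ip n gg e0 h" using pq by (simp add: I_add)
    then show ?thesis using Suc.IH Suc.prems(2) by blast
  qed
qed

abbreviation TA where "TA \<equiv> tensor_algebra n :: 'k tens ring"
abbreviation If where "If \<equiv> genideal TA {ff}"
abbreviation Ig where "Ig \<equiv> genideal TA {gg}"

lemma ideal_If: "ideal If TA"
proof -
  interpret R: ring TA by (rule ring_TA)
  show ?thesis by (rule R.genideal_ideal) (simp add: ff_carrier)
qed

lemma ideal_Ig: "ideal Ig TA"
proof -
  interpret R: ring TA by (rule ring_TA)
  show ?thesis by (rule R.genideal_ideal) (simp add: gg_carrier)
qed

lemma Ig_carrier: "x \<in> Ig \<Longrightarrow> x \<in> tens_carrier n"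
  using ideal.Icarr[OF ideal_Ig] by simp
lemma If_carrier: "x \<in> If \<Longrightarrow> x \<in> tens_carrier n"
  using ideal.Icarr[OF ideal_If] by simp

lemma Ig_add: "x \<in> Ig \<Longrightarrow> y \<in> Ig \<Longrightarrow> x + y \<in> Ig"
  using additive_subgroup.a_closed[OF ideal.axioms(1)[OF ideal_Ig]] by simp
lemma If_add: "x \<in> If \<Longrightarrow> y \<in> If \<Longrightarrow> x + y \<in> If"
  using additive_subgroup.a_closed[OF ideal.axioms(1)[OF ideal_If]] by simp
lemma Ig_zero: "0 \<in> Ig"
  using additive_subgroup.zero_closed[OF ideal.axioms(1)[OF ideal_Ig]] by simp
lemma If_zero: "0 \<in> If"
  using additive_subgroup.zero_closed[OF ideal.axioms(1)[OF ideal_If]] by simp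
lemma Ig_neg: "x \<in> Ig \<Longrightarrow> - x \<in> Ig"
  using additive_subgroup.a_inv_closed[OF ideal.axioms(1)[OF ideal_Ig]] Ig_carrier TA_a_inv by metis
lemma If_sum: "(\<And>i. i \<in> A \<Longrightarrow> F i \<in> If) \<Longrightarrow> (\<Sum>i\<in>A. F i) \<in> If"
  by (induction A rule: infinite_finite_induct) (auto intro: If_add If_zero)

lemma Kp_ff_If: "Kp n ff d p \<Longrightarrow> p \<in> If" using Kp_sub_genideal ff_carrier by blast
lemma Kp_gg_Ig: "Kp n gg d p \<Longrightarrow> p \<in> Ig" using Kp_sub_genideal gg_carrier by blast

lemma Ip_ff_hc: "Ip n ff e p \<Longrightarrow> Kp n ff d (hc d p)"
proof (induction rule: Ip.induct)
  case (I_K d' p e)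
  have "is_hom d' p" using Kset_hom[OF I_K(1) ff_homog] .
  then show ?case using I_K(1) by (cases "d' = d") (auto simp: hc_hom hc_hom_other K_zero)
next
  case (I_add e p q)
  then show ?case by (simp add: hc_add K_add)
qed

lemma If_hc: "p \<in> If \<Longrightarrow> Kp n ff d (hc d p)"
  using genideal_sub_Ip[OF ff_carrier] Ip_ff_hc by blast

lemma Ig_hc: "h \<in> Ig \<Longrightarrow> deg_le d h \<Longrightarrow> Kp n ff d (hc d h)"
  using genideal_sub_Ip[OF gg_carrier] P_lemma by blast

abbreviation LL where "LL m \<equiv> lower n Ig m"

lemma LL_Suc: "x \<in> LL (Suc m) \<longleftrightarrow> (\<exists>u v. u \<in> filt n m \<and> v \<in> Ig \<and> x = u + v)"
  by (auto simp: lower_def tens_add_eq)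
lemma LL_0: "LL 0 = Ig" by (simp add: lower_def)

lemma filt_zero: "0 \<in> filt n m" by (simp add: filt_eq)
lemma filt_add: "u \<in> filt n m \<Longrightarrow> v \<in> filt n m \<Longrightarrow> u + v \<in> filt n m"
  by (auto simp: filt_eq intro: deg_le_add)
lemma filt_neg: "u \<in> filt n m \<Longrightarrow> - u \<in> filt n m"
  by (auto simp: filt_eq intro: deg_le_neg)
lemma filt_mono: "u \<in> filt n m \<Longrightarrow> m \<le> m' \<Longrightarrow> u \<in> filt n m'"
  by (auto simp: filt_eq intro: deg_le_mono)

lemma LL_zero: "0 \<in> LL m"
  by (cases m) (auto simp: LL_0 Ig_zero LL_Suc intro!: exI[of _ 0] filt_zero)

lemma LL_add: "x \<in> LL m \<Longrightarrow> y \<in> LL m \<Longrightarrow> x + y \<in> LL m"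
proof (cases m)
  case 0 then show "x \<in> LL m \<Longrightarrow> y \<in> LL m \<Longrightarrow> x + y \<in> LL m" by (simp add: LL_0 Ig_add)
next
  case (Suc m')
  assume "x \<in> LL m" "y \<in> LL m"
  then obtain u1 v1 u2 v2 where "u1 \<in> filt n m'" "v1 \<in> Ig" "x = u1 + v1" "u2 \<in> filt n m'" "v2 \<in> Ig" "y = u2 + v2"
    using Suc LL_Suc by blast
  then have "x + y = (u1 + u2) + (v1 + v2)" "u1 + u2 \<in> filt n m'" "v1 + v2 \<in> Ig"
    by (auto simp: algebra_simps filt_add Ig_add)
  then show ?thesis using Suc LL_Suc by blast
qed

lemma LL_neg: "x \<in> LL m \<Longrightarrow> - x \<in> LL m"
proof (cases m)
  case 0 then show "x \<in> LL m \<Longrightarrow> - x \<in> LL m" by (simp add: LL_0 Ig_neg)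
next
  case (Suc m')
  assume "x \<in> LL m"
  then obtain u v where "u \<in> filt n m'" "v \<in> Ig" "x = u + v" using Suc LL_Suc by blast
  then have "- x = (- u) + (- v)" "- u \<in> filt n m'" "- v \<in> Ig" by (auto simp: filt_neg Ig_neg)
  then show ?thesis using Suc LL_Suc by blast
qed

lemma LL_diff: "x \<in> LL m \<Longrightarrow> y \<in> LL m \<Longrightarrow> x - y \<in> LL m"
  using LL_add[OF _ LL_neg] by (metis diff_conv_add_uminus)

lemma LL_sum: "(\<And>i. i \<in> A \<Longrightarrow> F i \<in> LL m) \<Longrightarrow> (\<Sum>i\<in>A. F i) \<in> LL m"
  by (induction A rule: infinite_finite_induct) (auto intro: LL_add LL_zero)

lemma filt_LL: "u \<in> filt n m \<Longrightarrow> u \<in> LL (Suc m)"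
  using LL_Suc Ig_zero by fastforce

lemma LL_carrier: "x \<in> LL m \<Longrightarrow> x \<in> tens_carrier n"
  by (cases m) (auto simp: LL_0 LL_Suc Ig_carrier filt_eq)

lemma W1: "Kp n ff m p \<Longrightarrow> p \<in> LL m"
proof -
  assume p: "Kp n ff m p"
  obtain q where q: "Kp n gg m q" "deg_lt m (p - q)" using Kp_ff_lower[OF p] by blast
  show ?thesis
  proof (cases m)
    case 0
    then show ?thesis using Kset_small[OF p] LL_zero by simp
  next
    case (Suc m')
    have pc: "p \<in> tens_carrier n" using Kset_carrier[OF p ff_carrier] .
    have qc: "q \<in> tens_carrier n" using Kset_carrier[OF q(1) gg_carrier] .
    have "p - q \<in> filt n m'" using q(2) Suc pc qc by (auto simp: filt_eq deg_le_def deg_lt_def)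
    moreover have "q \<in> Ig" using Kp_gg_Ig[OF q(1)] .
    moreover have "p = (p - q) + q" by simp
    ultimately show ?thesis using Suc LL_Suc by blast
  qed
qed

lemma W2: "x \<in> filt n m \<Longrightarrow> x \<in> LL m \<Longrightarrow> hc m x \<in> If"
proof (cases m)
  case 0
  assume "x \<in> filt n m" "x \<in> LL m"
  then have "x \<in> Ig" "deg_le 0 x" using 0 by (auto simp: LL_0 filt_eq)
  then show ?thesis using Ig_hc Kp_ff_If 0 by blast
next
  case (Suc m')
  assume x: "x \<in> filt n m" "x \<in> LL m"
  then obtain u v where uv: "u \<in> filt n m'" "v \<in> Ig" "x = u + v" using Suc LL_Suc by blast
  have "deg_le m v"
  proof -
    have "v = x - u" using uv by simp
    moreover have "deg_le m x" "deg_le m u" using x uv Suc by (auto simp: filt_eq intro: deg_le_mono)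
    ultimately show ?thesis by (simp add: deg_le_diff)
  qed
  then have "Kp n ff m (hc m v)" using Ig_hc uv(2) by blast
  moreover have "hc m u = 0" using uv(1) Suc by (intro hc_deg_gt) (auto simp: filt_eq)
  ultimately have "Kp n ff m (hc m x)" using uv(3) by (simp add: hc_add)
  then show ?thesis by (rule Kp_ff_If)
qed

end


context pbw
begin

abbreviation gc where "gc m x \<equiv> gcoset n Ig m x"

lemma gc_eq: "x - y \<in> LL m \<Longrightarrow> gc m x = gc m y"
proof -
  assume d: "x - y \<in> LL m"
  have "gc m x \<subseteq> gc m y"
  proof
    fix u assume "u \<in> gc m x"
    then obtain z where z: "z \<in> LL m" "u = x + z" by (auto simp: gcoset_def tens_add_eq)
    then have "u = y + ((x - y) + z)" by simp
    moreover have "(x - y) + z \<in> LL m" using d z(1) by (rule LL_add)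
    ultimately show "u \<in> gc m y" unfolding gcoset_def tens_add_eq by blast
  qed
  moreover have "gc m y \<subseteq> gc m x"
  proof
    fix u assume "u \<in> gc m y"
    then obtain z where z: "z \<in> LL m" "u = y + z" by (auto simp: gcoset_def tens_add_eq)
    then have "u = x + (- (x - y) + z)" by simp
    moreover have "- (x - y) + z \<in> LL m" using LL_neg[OF d] z(1) by (rule LL_add)
    ultimately show "u \<in> gc m x" unfolding gcoset_def tens_add_eq by blast
  qed
  ultimately show ?thesis by blast
qed

lemma gc_self: "x \<in> gc m x"
  using LL_zero[of m] by (auto simp: gcoset_def tens_add_eq intro!: exI[of _ 0])

lemma gc_eqD: "gc m x = gc m y \<Longrightarrow> x - y \<in> LL m"
proof -
  assume "gc m x = gc m y"
  then have "x \<in> gc m y" using gc_self by blast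
  then obtain z where "z \<in> LL m" "x = y + z" by (auto simp: gcoset_def tens_add_eq)
  then show ?thesis by simp
qed

lemma gc_zero: "gc m 0 = LL m"
  by (auto simp: gcoset_def tens_add_eq)

lemma grrep_prop:
  assumes x: "x \<in> filt n m"
  shows "grrep n m (gc m x) \<in> filt n m \<and> grrep n m (gc m x) - x \<in> LL m"
proof -
  have "\<exists>y. y \<in> filt n m \<and> y \<in> gc m x" using x gc_self by blast
  then have "grrep n m (gc m x) \<in> filt n m \<and> grrep n m (gc m x) \<in> gc m x"
    unfolding grrep_def by (rule someI_ex)
  moreover have "y \<in> gc m x \<Longrightarrow> y - x \<in> LL m" for y
    by (auto simp: gcoset_def tens_add_eq)
  ultimately show ?thesis by blast
qed

lemma filt_tm: "u \<in> filt n i \<Longrightarrow> b \<in> filt n j \<Longrightarrow> u \<odot> b \<in> filt n (i + j)"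
  by (auto simp: filt_eq intro: deg_le_tm)

lemma Ig_LL: assumes v: "v \<in> Ig" shows "v \<in> LL m"
proof (cases m)
  case 0 then show ?thesis using v LL_0 by simp
next
  case (Suc k)
  have "v = 0 + v" by simp
  then show ?thesis using Suc LL_Suc[where m=k] filt_zero[where m=k] v by blast
qed

lemma Ig_mult_r: "v \<in> Ig \<Longrightarrow> b \<in> tens_carrier n \<Longrightarrow> v \<odot> b \<in> Ig"
  using ideal.I_r_closed[OF ideal_Ig] by simp
lemma Ig_mult_l: "v \<in> Ig \<Longrightarrow> b \<in> tens_carrier n \<Longrightarrow> b \<odot> v \<in> Ig"
  using ideal.I_l_closed[OF ideal_Ig] by simp

lemma LL_mul:
  assumes aa: "aa \<in> LL i" and b: "b \<in> filt n j"
  shows "aa \<odot> b \<in> LL (i + j) \<and> b \<odot> aa \<in> LL (j + i)"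
proof (cases i)
  case 0
  then have "aa \<in> Ig" using aa LL_0 by simp
  moreover have "b \<in> tens_carrier n" using b by (simp add: filt_eq)
  ultimately show ?thesis using Ig_mult_r Ig_mult_l Ig_LL by blast
next
  case (Suc i')
  then obtain u v where uv: "u \<in> filt n i'" "v \<in> Ig" "aa = u + v" using aa LL_Suc by blast
  have bc: "b \<in> tens_carrier n" using b by (simp add: filt_eq)
  have "aa \<odot> b = u \<odot> b + v \<odot> b" using uv(3) by (simp add: tm_add_left)
  moreover have "u \<odot> b \<in> filt n (i' + j)" using filt_tm[OF uv(1) b] .
  moreover have "v \<odot> b \<in> Ig" using Ig_mult_r[OF uv(2) bc] .
  ultimately have 1: "aa \<odot> b \<in> LL (i + j)" using Suc LL_Suc by auto
  have "b \<odot> aa = b \<odot> u + b \<odot> v" using uv(3) by (simp add: tm_add_right)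
  moreover have "b \<odot> u \<in> filt n (j + i')" using filt_tm[OF b uv(1)] .
  moreover have "b \<odot> v \<in> Ig" using Ig_mult_l[OF uv(2) bc] .
  ultimately have 2: "b \<odot> aa \<in> LL (j + i)" using Suc LL_Suc by auto
  show ?thesis using 1 2 by blast
qed

definition psi :: "'k tens \<Rightarrow> nat \<Rightarrow> 'k tens set" where
  "psi p = (\<lambda>m. gc m (hc m p))"

lemma hc_filt: "p \<in> tens_carrier n \<Longrightarrow> hc m p \<in> filt n m"
  by (simp add: filt_eq carrier_hc deg_le_hc)

lemma psi_welldef:
  assumes "p - q \<in> If" shows "psi p = psi q"
proof (rule ext)
  fix m
  have "Kp n ff m (hc m (p - q))" using If_hc[OF assms] .
  then have "hc m p - hc m q \<in> LL m" using W1 by (simp add: hc_diff)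
  then show "psi p m = psi q m" by (simp add: psi_def gc_eq)
qed

lemma psi_mult:
  assumes p: "p \<in> tens_carrier n" and q: "q \<in> tens_carrier n"
  shows "psi (p \<odot> q) = mult (assoc_graded n Ig) (psi p) (psi q)"
proof (rule ext)
  fix m
  define x where "x = (\<lambda>i. grrep n i (gc i (hc i p)))"
  define y where "y = (\<lambda>i. grrep n i (gc i (hc i q)))"
  have x: "x i \<in> filt n i" "x i - hc i p \<in> LL i" for i
    using grrep_prop[OF hc_filt[OF p]] by (auto simp: x_def)
  have y: "y i \<in> filt n i" "y i - hc i q \<in> LL i" for i
    using grrep_prop[OF hc_filt[OF q]] by (auto simp: y_def)
  have "(\<lambda>w. \<Sum>i\<le>m. (x i \<odot> y (m - i)) w) = (\<Sum>i\<le>m. x i \<odot> y (m - i))"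
    by (simp add: fun_eq_iff sum_fun_apply)
  then have rhs: "mult (assoc_graded n Ig) (psi p) (psi q) m = gc m (\<Sum>i\<le>m. x i \<odot> y (m - i))"
    by (simp add: assoc_graded_def psi_def x_def y_def)
  have "(\<Sum>i\<le>m. x i \<odot> y (m - i)) - hc m (p \<odot> q)
      = (\<Sum>i\<le>m. (x i - hc i p) \<odot> y (m - i) + hc i p \<odot> (y (m - i) - hc (m - i) q))"
    by (simp add: hc_tm sum_subtractf[symmetric] tm_diff_left tm_diff_right)
  also have "\<dots> \<in> LL m"
  proof (rule LL_sum)
    fix i assume i: "i \<in> {..m}"
    have "(x i - hc i p) \<odot> y (m - i) \<in> LL (i + (m - i))" using LL_mul[OF x(2) y(1)] by blast
    moreover have "hc i p \<odot> (y (m - i) - hc (m - i) q) \<in> LL (i + (m - i))"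
      using LL_mul[OF y(2) hc_filt[OF p]] by blast
    ultimately show "(x i - hc i p) \<odot> y (m - i) + hc i p \<odot> (y (m - i) - hc (m - i) q) \<in> LL m"
      using i by (auto intro: LL_add)
  qed
  finally have "gc m (\<Sum>i\<le>m. x i \<odot> y (m - i)) = gc m (hc m (p \<odot> q))" by (rule gc_eq)
  then show "psi (p \<odot> q) m = mult (assoc_graded n Ig) (psi p) (psi q) m"
    using rhs by (simp add: psi_def)
qed

lemma psi_add:
  assumes p: "p \<in> tens_carrier n" and q: "q \<in> tens_carrier n"
  shows "psi (p + q) = add (assoc_graded n Ig) (psi p) (psi q)"
proof (rule ext)
  fix m
  define x where "x = grrep n m (gc m (hc m p))"
  define y where "y = grrep n m (gc m (hc m q))"
  have x: "x - hc m p \<in> LL m" using grrep_prop[OF hc_filt[OF p]] by (auto simp: x_def)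
  have y: "y - hc m q \<in> LL m" using grrep_prop[OF hc_filt[OF q]] by (auto simp: y_def)
  have "(x + y) - hc m (p + q) = (x - hc m p) + (y - hc m q)" by (simp add: hc_add)
  also have "\<dots> \<in> LL m" using x y by (rule LL_add)
  finally have "gc m (x + y) = gc m (hc m (p + q))" by (rule gc_eq)
  then show "psi (p + q) m = add (assoc_graded n Ig) (psi p) (psi q) m"
    by (simp add: assoc_graded_def psi_def x_def y_def tens_add_eq)
qed

lemma hc_wd_nil: "hc m (wd []) = (if m = 0 then wd [] else 0)"
  by (auto simp: fun_eq_iff hc_apply wd_def zero_fun_def)

lemma psi_one: "psi (wd []) = one (assoc_graded n Ig)"
  by (simp add: fun_eq_iff psi_def assoc_graded_def hc_wd_nil tens_const_eq tens_zero_eq)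

lemma psi_scalar: "psi (tens_const c') = gr_scalar n Ig c'"
  by (simp add: fun_eq_iff psi_def gr_scalar_def tens_const_eq hc_smul hc_wd_nil tens_zero_eq)

lemma psi_carrier:
  assumes p: "p \<in> tens_carrier n" shows "psi p \<in> carrier (assoc_graded n Ig)"
proof -
  obtain B where B: "deg_le B p" using carrier_bounded[OF p] by blast
  have "{m. psi p m \<noteq> LL m} \<subseteq> {..B}"
  proof
    fix m assume "m \<in> {m. psi p m \<noteq> LL m}"
    then have "psi p m \<noteq> LL m" by simp
    show "m \<in> {..B}"
    proof (rule ccontr)
      assume "m \<notin> {..B}"
      then have "hc m p = 0" using B by (intro hc_deg_gt) auto
      then have "psi p m = LL m" by (simp add: psi_def gc_zero)
      then show False using \<open>psi p m \<noteq> LL m\<close> by simp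
    qed
  qed
  then have "finite {m. psi p m \<noteq> LL m}" by (rule finite_subset) simp
  moreover have "\<forall>m. \<exists>x\<in>filt n m. psi p m = gc m x" using hc_filt[OF p] by (auto simp: psi_def)
  ultimately show ?thesis by (simp add: assoc_graded_def)
qed

lemma filt_hc_diff: "x \<in> filt n (Suc j) \<Longrightarrow> x - hc (Suc j) x \<in> filt n j"
  by (auto simp: filt_eq deg_le_def hc_apply minus_apply carrier_hc intro!: carrier_diff split: if_splits)

lemma filt0_hc: "x \<in> filt n 0 \<Longrightarrow> hc 0 x = x"
  by (auto simp: filt_eq deg_le_def hc_apply fun_eq_iff)

lemma gc_hc: assumes x: "x \<in> filt n m" shows "gc m (hc m x) = gc m x"
proof (cases m)
  case 0
  then have "hc m x = x" using filt0_hc x by simp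
  then show ?thesis by simp
next
  case (Suc j)
  then have "x - hc m x \<in> LL m" using x filt_hc_diff filt_LL by blast
  then show ?thesis by (intro gc_eq[symmetric])
qed

lemma psi_surj:
  assumes d: "d \<in> carrier (assoc_graded n Ig)"
  shows "\<exists>p. p \<in> tens_carrier n \<and> psi p = d \<and> (\<forall>m. (\<forall>j. j \<noteq> m \<longrightarrow> d j = LL j) \<longrightarrow> p \<in> homog n m)"
proof -
  have d1: "\<forall>m. \<exists>x. x \<in> filt n m \<and> d m = gc m x" and fin: "finite {m. d m \<noteq> LL m}"
    using d by (auto simp: assoc_graded_def)
  then obtain xs where xs: "\<And>m. xs m \<in> filt n m" "\<And>m. d m = gc m (xs m)" by metis
  define S where "S = {m. d m \<noteq> LL m}"
  define p where "p = (\<Sum>m\<in>S. hc m (xs m))"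
  have xc: "xs m \<in> tens_carrier n" for m using xs(1) by (simp add: filt_eq)
  have pc: "p \<in> tens_carrier n" unfolding p_def using xc by (intro carrier_sum carrier_hc)
  have hcp: "hc j p = (if j \<in> S then hc j (xs j) else 0)" for j
  proof -
    have "hc j p = (\<Sum>m\<in>S. hc j (hc m (xs m)))" by (simp add: p_def hc_sum)
    also have "\<dots> = (if j \<in> S then hc j (xs j) else 0)"
    proof (cases "j \<in> S")
      case True
      have "(\<Sum>m\<in>S. hc j (hc m (xs m))) = hc j (hc j (xs j))"
        using fin True by (intro sum_single) (auto simp: S_def hc_hc_other)
      then show ?thesis using True by (simp add: hc_hc)
    next
      case False
      then have "(\<Sum>m\<in>S. hc j (hc m (xs m))) = 0"
        by (intro sum.neutral ballI hc_hc_other) auto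
      then show ?thesis using False by simp
    qed
    finally show ?thesis .
  qed
  have "psi p = d"
  proof (rule ext)
    fix j
    show "psi p j = d j"
    proof (cases "j \<in> S")
      case True
      then show ?thesis using gc_hc[OF xs(1)] xs(2) by (simp add: psi_def hcp)
    next
      case False
      then show ?thesis by (simp add: psi_def hcp gc_zero S_def)
    qed
  qed
  moreover have "p \<in> homog n m" if h: "\<forall>j. j \<noteq> m \<longrightarrow> d j = LL j" for m
  proof -
    have "S \<subseteq> {m}" using h by (auto simp: S_def)
    then show ?thesis unfolding p_def using xc
      by (intro homog_sum) (auto intro: homog_hc)
  qed
  ultimately show ?thesis using pc by blast
qed

end


context pbw
begin

definition phi :: "'k tens set \<Rightarrow> nat \<Rightarrow> 'k tens set" where
  "phi X = psi (SOME p. p \<in> tens_carrier n \<and> X = If +>\<^bsub>TA\<^esub> p)"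

lemma Quot_carrier: "carrier (TA Quot If) = (\<lambda>p. If +>\<^bsub>TA\<^esub> p) ` tens_carrier n"
  by (auto simp add: FactRing_def A_RCOSETS_def')

lemma coset_eq:
  assumes p: "p \<in> tens_carrier n" and q: "q \<in> tens_carrier n"
  shows "(If +>\<^bsub>TA\<^esub> p = If +>\<^bsub>TA\<^esub> q) \<longleftrightarrow> p - q \<in> If"
proof -
  interpret R: ring TA by (rule ring_TA)
  show ?thesis using R.quotient_eq_iff_same_a_r_cos[OF ideal_If, of p q] p q TA_a_minus[OF p q] by simp
qed

lemma phi_coset: assumes p: "p \<in> tens_carrier n" shows "phi (If +>\<^bsub>TA\<^esub> p) = psi p"
proof -
  define q where "q = (SOME q. q \<in> tens_carrier n \<and> If +>\<^bsub>TA\<^esub> p = If +>\<^bsub>TA\<^esub> q)"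
  have "q \<in> tens_carrier n \<and> If +>\<^bsub>TA\<^esub> p = If +>\<^bsub>TA\<^esub> q"
    unfolding q_def by (rule someI[of _ p]) (use p in simp)
  then have "q - p \<in> If" "q \<in> tens_carrier n" using coset_eq p by auto
  then have "psi q = psi p" using psi_welldef by blast
  then show ?thesis by (simp add: phi_def q_def)
qed

lemma rcos_hom: "(\<lambda>p. If +>\<^bsub>TA\<^esub> p) \<in> ring_hom TA (TA Quot If)"
  using ideal.rcos_ring_hom[OF ideal_If] by simp

lemma Quot_mult: "p \<in> tens_carrier n \<Longrightarrow> q \<in> tens_carrier n \<Longrightarrow>
   (If +>\<^bsub>TA\<^esub> p) \<otimes>\<^bsub>TA Quot If\<^esub> (If +>\<^bsub>TA\<^esub> q) = If +>\<^bsub>TA\<^esub> (p \<odot> q)"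
  using ring_hom_mult[OF rcos_hom, of p q] by simp
lemma Quot_add: "p \<in> tens_carrier n \<Longrightarrow> q \<in> tens_carrier n \<Longrightarrow>
   (If +>\<^bsub>TA\<^esub> p) \<oplus>\<^bsub>TA Quot If\<^esub> (If +>\<^bsub>TA\<^esub> q) = If +>\<^bsub>TA\<^esub> (p + q)"
  using ring_hom_add[OF rcos_hom, of p q] by simp
lemma Quot_one: "\<one>\<^bsub>TA Quot If\<^esub> = If +>\<^bsub>TA\<^esub> wd []"
  using ring_hom_one[OF rcos_hom] by simp

lemma phi_hom: "phi \<in> ring_hom (TA Quot If) (assoc_graded n Ig)"
proof (rule ring_hom_memI)
  fix X assume "X \<in> carrier (TA Quot If)"
  then obtain p where p: "p \<in> tens_carrier n" "X = If +>\<^bsub>TA\<^esub> p" using Quot_carrier by auto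
  then show "phi X \<in> carrier (assoc_graded n Ig)" using phi_coset psi_carrier by simp
next
  fix X Y assume "X \<in> carrier (TA Quot If)" "Y \<in> carrier (TA Quot If)"
  then obtain p q where p: "p \<in> tens_carrier n" "X = If +>\<^bsub>TA\<^esub> p" and q: "q \<in> tens_carrier n" "Y = If +>\<^bsub>TA\<^esub> q"
    using Quot_carrier by auto
  show "phi (X \<otimes>\<^bsub>TA Quot If\<^esub> Y) = phi X \<otimes>\<^bsub>assoc_graded n Ig\<^esub> phi Y"
    using p q by (simp add: Quot_mult phi_coset carrier_tm psi_mult)
  show "phi (X \<oplus>\<^bsub>TA Quot If\<^esub> Y) = phi X \<oplus>\<^bsub>assoc_graded n Ig\<^esub> phi Y"
    using p q by (simp add: Quot_add phi_coset carrier_add psi_add)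
next
  show "phi \<one>\<^bsub>TA Quot If\<^esub> = \<one>\<^bsub>assoc_graded n Ig\<^esub>"
    using phi_coset[OF carrier_wd[of "[]" n]] by (simp add: Quot_one psi_one)
qed

lemma phi_inj: "inj_on phi (carrier (TA Quot If))"
proof (rule inj_onI)
  fix X Y assume "X \<in> carrier (TA Quot If)" "Y \<in> carrier (TA Quot If)" and eq: "phi X = phi Y"
  then obtain p q where p: "p \<in> tens_carrier n" "X = If +>\<^bsub>TA\<^esub> p" and q: "q \<in> tens_carrier n" "Y = If +>\<^bsub>TA\<^esub> q"
    using Quot_carrier by auto
  have ps: "psi p = psi q" using eq p q phi_coset by simp
  have pq: "p - q \<in> tens_carrier n" using p q by auto
  have hcI: "hc m (p - q) \<in> If" for m
  proof -
    have "gc m (hc m p) = gc m (hc m q)" using ps by (simp add: psi_def fun_eq_iff)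
    then have "hc m (p - q) \<in> LL m" using gc_eqD by (simp add: hc_diff)
    then have "hc m (hc m (p - q)) \<in> If" using W2 hc_filt[OF pq] by blast
    then show ?thesis by (simp add: hc_hc)
  qed
  obtain B where B: "deg_le B (p - q)" using carrier_bounded[OF pq] by blast
  have "p - q = (\<Sum>m\<le>B. hc m (p - q))" by (rule hc_decomp[OF B])
  also have "\<dots> \<in> If" using hcI by (intro If_sum)
  finally show "X = Y" using p q coset_eq by simp
qed

lemma phi_image: "phi ` carrier (TA Quot If) = carrier (assoc_graded n Ig)"
proof
  show "phi ` carrier (TA Quot If) \<subseteq> carrier (assoc_graded n Ig)"
    by (rule image_subsetI) (rule ring_hom_closed[OF phi_hom])
next
  show "carrier (assoc_graded n Ig) \<subseteq> phi ` carrier (TA Quot If)"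
  proof
    fix d assume "d \<in> carrier (assoc_graded n Ig)"
    then obtain p where p: "p \<in> tens_carrier n" "psi p = d" using psi_surj by blast
    then have "d = phi (If +>\<^bsub>TA\<^esub> p)" using phi_coset by simp
    moreover have "If +>\<^bsub>TA\<^esub> p \<in> carrier (TA Quot If)" using p Quot_carrier by auto
    ultimately show "d \<in> phi ` carrier (TA Quot If)" by blast
  qed
qed

lemma phi_iso: "phi \<in> ring_iso (TA Quot If) (assoc_graded n Ig)"
  unfolding ring_iso_def bij_betw_def using phi_hom phi_inj phi_image by blast

lemma phi_scalar: "phi (If +>\<^bsub>TA\<^esub> tens_const c') = gr_scalar n Ig c'"
  using phi_coset[OF carrier_const] psi_scalar by simp

lemma phi_degree: "phi ` {If +>\<^bsub>TA\<^esub> p | p. p \<in> homog n m} = gr_degree n Ig m"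
proof
  show "phi ` {If +>\<^bsub>TA\<^esub> p | p. p \<in> homog n m} \<subseteq> gr_degree n Ig m"
  proof
    fix d assume "d \<in> phi ` {If +>\<^bsub>TA\<^esub> p | p. p \<in> homog n m}"
    then obtain p where p: "p \<in> homog n m" "d = phi (If +>\<^bsub>TA\<^esub> p)" by blast
    have pc: "p \<in> tens_carrier n" using p(1) by (rule homog_carrier)
    then have d: "d = psi p" using p(2) phi_coset by simp
    have "d \<in> carrier (assoc_graded n Ig)" using d psi_carrier[OF pc] by simp
    moreover have "d j = LL j" if "j \<noteq> m" for j
    proof -
      have "hc j p = 0" using hc_hom_other[OF homog_is_hom[OF p(1)] that[symmetric]] .
      then show ?thesis using d by (simp add: psi_def gc_zero)
    qed
    ultimately show "d \<in> gr_degree n Ig m" by (simp add: gr_degree_def)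
  qed
next
  show "gr_degree n Ig m \<subseteq> phi ` {If +>\<^bsub>TA\<^esub> p | p. p \<in> homog n m}"
  proof
    fix d assume d: "d \<in> gr_degree n Ig m"
    then have dc: "d \<in> carrier (assoc_graded n Ig)" and dl: "\<forall>j. j \<noteq> m \<longrightarrow> d j = LL j"
      by (auto simp: gr_degree_def)
    obtain p where p: "p \<in> tens_carrier n" "psi p = d" "p \<in> homog n m" using psi_surj[OF dc] dl by blast
    then have "d = phi (If +>\<^bsub>TA\<^esub> p)" using phi_coset by simp
    then show "d \<in> phi ` {If +>\<^bsub>TA\<^esub> p | p. p \<in> homog n m}" using p(3) by blast
  qed
qed

lemma main: "\<exists>\<phi>. \<phi> \<in> ring_iso (TA Quot If) (assoc_graded n Ig) \<and>
        (\<forall>c. \<phi> (If +>\<^bsub>TA\<^esub> tens_const c) = gr_scalar n Ig c) \<and>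
        (\<forall>m. \<phi> ` {If +>\<^bsub>TA\<^esub> p | p. p \<in> homog n m} = gr_degree n Ig m)"
  using phi_iso phi_scalar phi_degree by blast

end

theorem proposition3p2:
  fixes n :: nat and M :: "nat \<Rightarrow> nat \<Rightarrow> 'k::field_char_0"
    and a :: "nat \<Rightarrow> 'k" and c :: 'k
  assumes "n \<ge> 1"
    and "invertible_mat n M"
  shows "PBW_deformation n
           (\<lambda>w. quad_elem n M w - lin_elem n a w - tens_const c w)
           (quad_elem n M)"
proof -
  obtain N where N: "\<forall>i<n. \<forall>k<n. (\<Sum>j<n. M i j * N j k) = (if i = k then 1 else 0) \<and>
      (\<Sum>j<n. N i j * M j k) = (if i = k then 1 else 0)"
    using assms(2) unfolding invertible_mat_def by blast
  interpret P: pbw n M a c N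
    by unfold_locales (use assms(1) N in auto)
  have g: "(\<lambda>w. quad_elem n M w - lin_elem n a w - tens_const c w) = P.gg" by (rule P.gg_eq)
  have f: "quad_elem n M = P.ff" by (simp add: P.ff_def)
  show ?thesis unfolding PBW_deformation_def Let_def g unfolding f using P.main by blast
qed


end
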